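(* Let $G=(V,E)$ be a finite graph with couplings $J_e>0$ and $t_e=\tanh(J_e)$. Fix $A,B\subset V$ with $|A|,|B|$ even. Let $\Omega=\{0,1\}^E$, $\Sigma=\{F\subset E\mid \partial F=A\}$, $f:\Omega\to2^\Sigma$, $f(\omega)=\{F\subset\omega\mid\partial F=A\}$, and $$\rho[\omega]\propto \mathbf{1}[\omega\in\mathcal{F}_A]\,(\ell^{A\triangle B}_t\cup\mathbb{P}_{t^2})[\omega]\ (\omega\in\Omega),\qquad\gamma[\eta]\propto1\ (\eta\in\Sigma).$$ Let $\mathscr{P}$ be the probability measure on $\Omega\times\Sigma$ with $\mathscr{P}[\omega,\eta]\propto\rho[\omega]\gamma[\eta]\mathbf{1}[\eta\in f(\omega)]$. Then: (a) The marginal of $\mathscr{P}$ on $\Sigma$ is $\ell^A_t$. For each $\omega\in\mathcal{F}_A\cap\mathcal{F}_B$, the conditional measure $\mathscr{P}[\cdot\mid\omega]$ is the uniform measure on $\{F\subset\omega\mid\partial F=A\}$. (b) The marginal of $\mathscr{P}$ on $\Omega$ is the double random current $\mathbf{P}^{A,B}_J$. For each $\eta\in\Sigma$, the conditional measure $\mathscr{P}[\cdot\mid\eta]$ is $\ell^B_t\cup\mathbb{P}_{t^2}\cup\delta_\eta$. In particular, the uniform subgraph with sources $A$ of a sample of the double random current with sources $A$ and $B$ has law $\ell^A_t$.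
   Context: Configurations $\omega\in\{0,1\}^E$ are identified with their sets of open edges. For $F\subset E$, $\partial F$ is the set of vertices of odd degree in $(V,F)$; $\mathcal{F}_A=\{\omega\subset E\mid\exists F\subset\omega,\ \partial F=A\}$. For positive weights $x=(x_e)$, $\ell^C_x[\omega]\propto\prod_{e\in\omega}x_e\,\mathbf{1}[\partial\omega=C]$ (loop $\mathrm{O}(1)$ model with sources $C$). $\mathbb{P}_{t^2}$ is Bernoulli percolation on $E$ with edge $e$ open independently with probability $t_e^2$; $\delta_\eta$ is the Dirac mass at $\eta$. For measures $\pi,\nu$ on $\{0,1\}^E$, $\pi\cup\nu$ is the law of the union of the open edges of independent samples of $\pi$ and $\nu$. The single random current $\mathbf{P}^C_J$ is the law of $\{e:n_e>0\}$ where $(n_e)$ are independent Poisson$(J_e)$ conditioned on the set of vertices $v$ with $\sum_{e\ni v}n_e$ odd being $C$; the double random current $\mathbf{P}^{A,B}_J$ is the law of the union of independent samples of $\mathbf{P}^A_J$ and $\mathbf{P}^B_J$. *)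

theory Defs
  imports "HOL-Analysis.Analysis"
begin

text \<open>Graph: vertex set V, edge set E of two-element subsets of V.
  Configurations are subsets of E; measures on configurations are
  represented by their probability mass functions  'v set set => real.\<close>

definition simple_graph :: "'v set \<Rightarrow> 'v set set \<Rightarrow> bool" where
  "simple_graph V E \<longleftrightarrow> finite V \<and> (\<forall>e\<in>E. e \<subseteq> V \<and> card e = 2)"

definition bdry :: "'v set set \<Rightarrow> 'v set" where
  "bdry F = {v. odd (card {e\<in>F. v \<in> e})}"

definition FF :: "'v set set \<Rightarrow> 'v set \<Rightarrow> 'v set set set" where
  "FF E A = {\<omega>. \<omega> \<subseteq> E \<and> (\<exists>F. F \<subseteq> \<omega> \<and> bdry F = A)}"

definition symd :: "'a set \<Rightarrow> 'a set \<Rightarrow> 'a set" where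
  "symd A B = (A - B) \<union> (B - A)"

definition loopO1 :: "'v set set \<Rightarrow> ('v set \<Rightarrow> real) \<Rightarrow> 'v set \<Rightarrow> 'v set set \<Rightarrow> real" where
  "loopO1 E x C \<omega> =
     (if \<omega> \<subseteq> E \<and> bdry \<omega> = C then (\<Prod>e\<in>\<omega>. x e) else 0) /
     (\<Sum>\<omega>'\<in>Pow E. if bdry \<omega>' = C then (\<Prod>e\<in>\<omega>'. x e) else 0)"

definition perc :: "'v set set \<Rightarrow> ('v set \<Rightarrow> real) \<Rightarrow> 'v set set \<Rightarrow> real" where
  "perc E p \<omega> = (if \<omega> \<subseteq> E then (\<Prod>e\<in>\<omega>. p e) * (\<Prod>e\<in>E - \<omega>. 1 - p e) else 0)"

definition dirac :: "'v set set \<Rightarrow> 'v set set \<Rightarrow> real" where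
  "dirac \<eta> \<omega> = (if \<omega> = \<eta> then 1 else 0)"

definition munion :: "'v set set \<Rightarrow> ('v set set \<Rightarrow> real) \<Rightarrow> ('v set set \<Rightarrow> real) \<Rightarrow> 'v set set \<Rightarrow> real" where
  "munion E \<pi> \<nu> \<omega> = (\<Sum>\<alpha>\<in>Pow E. \<Sum>\<beta>\<in>Pow E. if \<alpha> \<union> \<beta> = \<omega> then \<pi> \<alpha> * \<nu> \<beta> else 0)"

definition currents :: "'v set set \<Rightarrow> ('v set \<Rightarrow> nat) set" where
  "currents E = {n. \<forall>e. e \<notin> E \<longrightarrow> n e = 0}"

definition csrc :: "'v set set \<Rightarrow> ('v set \<Rightarrow> nat) \<Rightarrow> 'v set" where
  "csrc E n = {v. odd (\<Sum>e\<in>{e\<in>E. v \<in> e}. n e)}"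

definition poisson_weight :: "'v set set \<Rightarrow> ('v set \<Rightarrow> real) \<Rightarrow> ('v set \<Rightarrow> nat) \<Rightarrow> real" where
  "poisson_weight E J n = (\<Prod>e\<in>E. exp (- J e) * J e ^ n e / fact (n e))"

definition single_current :: "'v set set \<Rightarrow> ('v set \<Rightarrow> real) \<Rightarrow> 'v set \<Rightarrow> 'v set set \<Rightarrow> real" where
  "single_current E J C \<omega> =
     (\<Sum>\<^sub>\<infinity>n\<in>{n\<in>currents E. csrc E n = C \<and> {e\<in>E. n e > 0} = \<omega>}. poisson_weight E J n) /
     (\<Sum>\<^sub>\<infinity>n\<in>{n\<in>currents E. csrc E n = C}. poisson_weight E J n)"

definition double_current :: "'v set set \<Rightarrow> ('v set \<Rightarrow> real) \<Rightarrow> 'v set \<Rightarrow> 'v set \<Rightarrow> 'v set set \<Rightarrow> real" where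
  "double_current E J A B = munion E (single_current E J A) (single_current E J B)"

definition SigmaA :: "'v set set \<Rightarrow> 'v set \<Rightarrow> 'v set set set" where
  "SigmaA E A = {F. F \<subseteq> E \<and> bdry F = A}"

definition fsub :: "'v set \<Rightarrow> 'v set set \<Rightarrow> 'v set set set" where
  "fsub A \<omega> = {F. F \<subseteq> \<omega> \<and> bdry F = A}"

definition rho_unnorm :: "'v set set \<Rightarrow> ('v set \<Rightarrow> real) \<Rightarrow> 'v set \<Rightarrow> 'v set \<Rightarrow> 'v set set \<Rightarrow> real" where
  "rho_unnorm E t A B \<omega> = (if \<omega> \<in> FF E A
      then munion E (loopO1 E t (symd A B)) (perc E (\<lambda>e. (t e)\<^sup>2)) \<omega> else 0)"

definition rho :: "'v set set \<Rightarrow> ('v set \<Rightarrow> real) \<Rightarrow> 'v set \<Rightarrow> 'v set \<Rightarrow> 'v set set \<Rightarrow> real" where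
  "rho E t A B \<omega> = rho_unnorm E t A B \<omega> / (\<Sum>\<omega>'\<in>Pow E. rho_unnorm E t A B \<omega>')"

definition gamma :: "'v set set \<Rightarrow> 'v set \<Rightarrow> 'v set set \<Rightarrow> real" where
  "gamma E A \<eta> = (if \<eta> \<in> SigmaA E A then 1 / real (card (SigmaA E A)) else 0)"

definition joint_unnorm :: "'v set set \<Rightarrow> ('v set \<Rightarrow> real) \<Rightarrow> 'v set \<Rightarrow> 'v set \<Rightarrow> 'v set set \<Rightarrow> 'v set set \<Rightarrow> real" where
  "joint_unnorm E t A B \<omega> \<eta> =
     (if \<omega> \<subseteq> E \<and> \<eta> \<in> SigmaA E A \<and> \<eta> \<in> fsub A \<omega> then rho E t A B \<omega> * gamma E A \<eta> else 0)"

definition jointP :: "'v set set \<Rightarrow> ('v set \<Rightarrow> real) \<Rightarrow> 'v set \<Rightarrow> 'v set \<Rightarrow> 'v set set \<Rightarrow> 'v set set \<Rightarrow> real" where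
  "jointP E t A B \<omega> \<eta> = joint_unnorm E t A B \<omega> \<eta> /
     (\<Sum>\<omega>'\<in>Pow E. \<Sum>\<eta>'\<in>SigmaA E A. joint_unnorm E t A B \<omega>' \<eta>')"

end

theory Submission
  imports Defs
begin

lemma G0:
  fixes f g :: "'a \<Rightarrow> real"
  assumes "finite M" "L \<subseteq> M"
  shows "(\<Sum>X\<in>{X. L\<subseteq>X \<and> X\<subseteq>M}. \<Prod>e\<in>M. if e\<in>X then f e else g e)
       = (\<Prod>e\<in>M. if e\<in>L then f e else f e + g e)"
proof -
  have fML: "finite (M - L)" using assms by auto
  have img: "{X. L\<subseteq>X \<and> X\<subseteq>M} = (\<lambda>Y. L \<union> Y) ` Pow (M-L)"
  proof
    show "{X. L\<subseteq>X \<and> X\<subseteq>M} \<subseteq> (\<lambda>Y. L \<union> Y) ` Pow (M-L)"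
    proof
      fix X assume "X \<in> {X. L\<subseteq>X \<and> X\<subseteq>M}"
      then have "X = L \<union> (X - L)" "X - L \<in> Pow (M-L)" by auto
      then show "X \<in> (\<lambda>Y. L \<union> Y) ` Pow (M-L)" by blast
    qed
  qed (use assms in auto)
  have inj: "inj_on (\<lambda>Y. L \<union> Y) (Pow (M-L))"
    by (auto simp: inj_on_def)
  have split: "(\<Prod>e\<in>M. h e) = (\<Prod>e\<in>M-L. h e) * (\<Prod>e\<in>L. h e)" for h :: "'a \<Rightarrow> real"
    using prod.subset_diff[OF assms(2) assms(1)] by simp
  have "(\<Sum>X\<in>{X. L\<subseteq>X \<and> X\<subseteq>M}. \<Prod>e\<in>M. if e\<in>X then f e else g e)
      = (\<Sum>Y\<in>Pow (M-L). \<Prod>e\<in>M. if e\<in>L \<union> Y then f e else g e)"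
    unfolding img by (subst sum.reindex[OF inj]) simp
  also have "\<dots> = (\<Sum>Y\<in>Pow (M-L). (\<Prod>e\<in>Y. f e) * (\<Prod>e\<in>(M-L)-Y. g e) * (\<Prod>e\<in>L. f e))"
  proof (rule sum.cong[OF refl])
    fix Y assume Y: "Y \<in> Pow (M-L)"
    have "(\<Prod>e\<in>M. if e\<in>L \<union> Y then f e else g e)
        = (\<Prod>e\<in>M-L. if e\<in>L \<union> Y then f e else g e) * (\<Prod>e\<in>L. if e\<in>L \<union> Y then f e else g e)"
      by (rule split)
    also have "(\<Prod>e\<in>L. if e\<in>L \<union> Y then f e else g e) = (\<Prod>e\<in>L. f e)"
      by (rule prod.cong) auto
    also have "(\<Prod>e\<in>M-L. if e\<in>L \<union> Y then f e else g e) = (\<Prod>e\<in>M-L. if e\<in>Y then f e else g e)"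
      by (rule prod.cong) auto
    also have "\<dots> = (\<Prod>e\<in>Y. f e) * (\<Prod>e\<in>(M-L)-Y. g e)"
    proof -
      have e1: "(M - L) \<inter> {e. e \<in> Y} = Y" using Y by auto
      have e2: "(M - L) \<inter> - {e. e \<in> Y} = (M - L) - Y" by auto
      show ?thesis by (simp only: prod.If_cases[OF fML] e1 e2)
    qed
    finally show "(\<Prod>e\<in>M. if e\<in>L \<union> Y then f e else g e) = (\<Prod>e\<in>Y. f e) * (\<Prod>e\<in>(M-L)-Y. g e) * (\<Prod>e\<in>L. f e)" .
  qed
  also have "\<dots> = (\<Prod>e\<in>M-L. f e + g e) * (\<Prod>e\<in>L. f e)"
    by (simp add: prod_add[OF fML] sum_distrib_right)
  also have "\<dots> = (\<Prod>e\<in>M. if e\<in>L then f e else f e + g e)"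
  proof -
    have "(\<Prod>e\<in>M. if e\<in>L then f e else f e + g e) = (\<Prod>e\<in>M-L. if e\<in>L then f e else f e + g e) * (\<Prod>e\<in>L. if e\<in>L then f e else f e + g e)"
      by (rule split)
    also have "\<dots> = (\<Prod>e\<in>M-L. f e + g e) * (\<Prod>e\<in>L. f e)"
      by (intro arg_cong2[where f="(*)"] prod.cong) auto
    finally show ?thesis by simp
  qed
  finally show ?thesis .
qed

lemma G:
  fixes f g :: "'a \<Rightarrow> real"
  assumes "finite U" "L \<subseteq> M" "M \<subseteq> U"
  shows "(\<Sum>X\<in>{X. L\<subseteq>X \<and> X\<subseteq>M}. \<Prod>e\<in>U. if e\<in>X then f e else g e)
       = (\<Prod>e\<in>U. if e\<in>L then f e else if e \<in> M then f e + g e else g e)"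
proof -
  have fM: "finite M" using assms finite_subset by blast
  have split: "(\<Prod>e\<in>U. h e) = (\<Prod>e\<in>U-M. h e) * (\<Prod>e\<in>M. h e)" for h :: "'a \<Rightarrow> real"
    using prod.subset_diff[OF assms(3) assms(1)] by simp
  have "(\<Sum>X\<in>{X. L\<subseteq>X \<and> X\<subseteq>M}. \<Prod>e\<in>U. if e\<in>X then f e else g e)
     = (\<Sum>X\<in>{X. L\<subseteq>X \<and> X\<subseteq>M}. (\<Prod>e\<in>U-M. g e) * (\<Prod>e\<in>M. if e\<in>X then f e else g e))"
  proof (rule sum.cong[OF refl])
    fix X assume "X \<in> {X. L\<subseteq>X \<and> X\<subseteq>M}"
    then have X: "X \<subseteq> M" by auto
    show "(\<Prod>e\<in>U. if e\<in>X then f e else g e) = (\<Prod>e\<in>U-M. g e) * (\<Prod>e\<in>M. if e\<in>X then f e else g e)"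
      by (subst split, rule arg_cong2[where f="(*)"], rule prod.cong) (use X in auto)
  qed
  also have "\<dots> = (\<Prod>e\<in>U-M. g e) * (\<Prod>e\<in>M. if e\<in>L then f e else f e + g e)"
    by (simp add: sum_distrib_left[symmetric] G0[OF fM assms(2)])
  also have "\<dots> = (\<Prod>e\<in>U. if e\<in>L then f e else if e \<in> M then f e + g e else g e)"
    by (subst split, rule arg_cong2[where f="(*)"]; rule prod.cong) (use assms in auto)
  finally show ?thesis .
qed

lemma card_symd_parity:
  assumes "finite P" "finite Q"
  shows "odd (card (symd P Q)) \<longleftrightarrow> (odd (card P) \<noteq> odd (card Q))"
proof -
  have "card (symd P Q) + 2 * card (P \<inter> Q) = card P + card Q"
  proof -
    have d: "symd P Q = (P - Q) \<union> (Q - P)" by (simp add: symd_def)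
    have "card (symd P Q) = card (P - Q) + card (Q - P)"
      unfolding d by (rule card_Un_disjoint) (use assms in auto)
    moreover have "card P = card (P - Q) + card (P \<inter> Q)"
    proof -
      have "P = (P - Q) \<union> (P \<inter> Q)" by blast
      then have "card P = card ((P - Q) \<union> (P \<inter> Q))" by simp
      also have "\<dots> = card (P - Q) + card (P \<inter> Q)"
        by (rule card_Un_disjoint) (use assms in auto)
      finally show ?thesis .
    qed
    moreover have "card Q = card (Q - P) + card (P \<inter> Q)"
    proof -
      have "Q = (Q - P) \<union> (P \<inter> Q)" by blast
      then have "card Q = card ((Q - P) \<union> (P \<inter> Q))" by simp
      also have "\<dots> = card (Q - P) + card (P \<inter> Q)"
        by (rule card_Un_disjoint) (use assms in auto)
      finally show ?thesis .
    qed
    ultimately show ?thesis by linarith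
  qed
  then show ?thesis by presburger
qed

lemma mem_symd: "x \<in> symd A B \<longleftrightarrow> (x \<in> A) \<noteq> (x \<in> B)"
  by (auto simp: symd_def)

lemma bdry_symd:
  assumes "finite X" "finite Y"
  shows "bdry (symd X Y) = symd (bdry X) (bdry Y)"
proof -
  have "v \<in> bdry (symd X Y) \<longleftrightarrow> v \<in> symd (bdry X) (bdry Y)" for v
  proof -
    have e: "{e \<in> symd X Y. v \<in> e} = symd {e\<in>X. v\<in>e} {e\<in>Y. v\<in>e}"
      by (auto simp: symd_def)
    show ?thesis
      unfolding mem_symd[where x=v] unfolding bdry_def mem_Collect_eq e using card_symd_parity[of "{e\<in>X. v\<in>e}" "{e\<in>Y. v\<in>e}"] assms
      by simp
  qed
  then show ?thesis by blast
qed

lemma symd_symd: "symd A (symd A B) = B" "symd (symd A B) B = A"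
  by (auto simp: symd_def)



definition Zl :: "'v set set \<Rightarrow> ('v set \<Rightarrow> real) \<Rightarrow> 'v set \<Rightarrow> real" where
  "Zl E x C = (\<Sum>\<omega>'\<in>Pow E. if bdry \<omega>' = C then (\<Prod>e\<in>\<omega>'. x e) else 0)"

definition phi :: "'v set set \<Rightarrow> ('v set \<Rightarrow> real) \<Rightarrow> 'v set set \<Rightarrow> 'v set set \<Rightarrow> real" where
  "phi E t \<omega> \<delta> = (\<Prod>e\<in>E. if e\<in>\<delta> then t e else if e\<in>\<omega> then (t e)\<^sup>2 else 1 - (t e)\<^sup>2)"

definition Wsum :: "'v set set \<Rightarrow> ('v set \<Rightarrow> real) \<Rightarrow> 'v set \<Rightarrow> 'v set set \<Rightarrow> real" where
  "Wsum E t C \<omega> = (\<Sum>\<delta>\<in>Pow E. if \<delta> \<subseteq> \<omega> \<and> bdry \<delta> = C then phi E t \<omega> \<delta> else 0)"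

lemma prod_sub_E:
  fixes x :: "'a \<Rightarrow> real"
  assumes "finite E" "X \<subseteq> E"
  shows "(\<Prod>e\<in>X. x e) = (\<Prod>e\<in>E. if e\<in>X then x e else 1)"
proof -
  have "(\<Prod>e\<in>E. if e\<in>X then x e else 1) = (\<Prod>e\<in>E \<inter> {e. e\<in>X}. x e) * (\<Prod>e\<in>E \<inter> - {e. e\<in>X}. 1)"
    by (rule prod.If_cases[OF assms(1)])
  also have "E \<inter> {e. e\<in>X} = X" using assms by auto
  finally show ?thesis by simp
qed

lemma perc_E:
  assumes "finite E" "\<beta> \<subseteq> E"
  shows "perc E p \<beta> = (\<Prod>e\<in>E. if e\<in>\<beta> then p e else 1 - p e)"
proof -
  have "(\<Prod>e\<in>E. if e\<in>\<beta> then p e else 1 - p e) = (\<Prod>e\<in>E \<inter> {e. e\<in>\<beta>}. p e) * (\<Prod>e\<in>E \<inter> - {e. e\<in>\<beta>}. 1 - p e)"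
    by (rule prod.If_cases[OF assms(1)])
  also have "E \<inter> {e. e\<in>\<beta>} = \<beta>" using assms by auto
  also have "E \<inter> - {e. e\<in>\<beta>} = E - \<beta>" by auto
  finally show ?thesis using assms by (simp add: perc_def)
qed

lemma munion_W:
  assumes fin: "finite E" and w: "\<omega> \<subseteq> E"
  shows "munion E (loopO1 E t C) (perc E (\<lambda>e. (t e)\<^sup>2)) \<omega> = Wsum E t C \<omega> / Zl E t C"
proof -
  let ?p = "\<lambda>e. (t e)\<^sup>2"
  have inner: "(\<Sum>\<beta>\<in>Pow E. if \<alpha> \<union> \<beta> = \<omega> then loopO1 E t C \<alpha> * perc E ?p \<beta> else 0)
      = (if \<alpha> \<subseteq> \<omega> \<and> bdry \<alpha> = C then phi E t \<omega> \<alpha> / Zl E t C else 0)"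
    if a: "\<alpha> \<in> Pow E" for \<alpha>
  proof (cases "\<alpha> \<subseteq> \<omega> \<and> bdry \<alpha> = C")
    case True
    have l: "loopO1 E t C \<alpha> = (\<Prod>e\<in>E. if e\<in>\<alpha> then t e else 1) / Zl E t C"
      using True a prod_sub_E[OF fin, of \<alpha> t] by (simp add: loopO1_def Zl_def)
    have "(\<Sum>\<beta>\<in>Pow E. if \<alpha> \<union> \<beta> = \<omega> then loopO1 E t C \<alpha> * perc E ?p \<beta> else 0)
        = loopO1 E t C \<alpha> * (\<Sum>\<beta>\<in>{\<beta>\<in>Pow E. \<alpha> \<union> \<beta> = \<omega>}. perc E ?p \<beta>)"
      unfolding sum.inter_filter[OF finite_Pow_iff[THEN iffD2, OF fin]] sum_distrib_left
      by (rule sum.cong) auto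
    also have "{\<beta>\<in>Pow E. \<alpha> \<union> \<beta> = \<omega>} = {\<beta>. \<omega> - \<alpha> \<subseteq> \<beta> \<and> \<beta> \<subseteq> \<omega>}"
      using True w by auto
    also have "(\<Sum>\<beta>\<in>{\<beta>. \<omega> - \<alpha> \<subseteq> \<beta> \<and> \<beta> \<subseteq> \<omega>}. perc E ?p \<beta>)
        = (\<Sum>\<beta>\<in>{\<beta>. \<omega> - \<alpha> \<subseteq> \<beta> \<and> \<beta> \<subseteq> \<omega>}. \<Prod>e\<in>E. if e\<in>\<beta> then ?p e else 1 - ?p e)"
      by (rule sum.cong[OF refl], rule perc_E[OF fin]) (use w in auto)
    also have "\<dots> = (\<Prod>e\<in>E. if e\<in>\<omega> - \<alpha> then ?p e else if e\<in>\<omega> then ?p e + (1 - ?p e) else 1 - ?p e)"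
      by (rule G[OF fin]) (use w in auto)
    finally have "(\<Sum>\<beta>\<in>Pow E. if \<alpha> \<union> \<beta> = \<omega> then loopO1 E t C \<alpha> * perc E ?p \<beta> else 0)
        = (\<Prod>e\<in>E. if e\<in>\<alpha> then t e else 1) * (\<Prod>e\<in>E. if e\<in>\<omega> - \<alpha> then ?p e else if e\<in>\<omega> then ?p e + (1 - ?p e) else 1 - ?p e) / Zl E t C"
      unfolding l by simp
    also have "(\<Prod>e\<in>E. if e\<in>\<alpha> then t e else 1) * (\<Prod>e\<in>E. if e\<in>\<omega> - \<alpha> then ?p e else if e\<in>\<omega> then ?p e + (1 - ?p e) else 1 - ?p e)
       = phi E t \<omega> \<alpha>"
      unfolding phi_def prod.distrib[symmetric]
      by (rule prod.cong[OF refl]) (use True in auto)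
    finally show ?thesis using True by simp
  next
    case False
    show ?thesis
    proof (cases "\<alpha> \<subseteq> \<omega>")
      case True
      with False have "bdry \<alpha> \<noteq> C" by auto
      then have z: "loopO1 E t C \<alpha> = 0" by (simp add: loopO1_def)
      have "(\<Sum>\<beta>\<in>Pow E. if \<alpha> \<union> \<beta> = \<omega> then loopO1 E t C \<alpha> * perc E ?p \<beta> else 0) = 0"
        by (rule sum.neutral) (simp add: z)
      then show ?thesis by (subst if_not_P[OF False]) simp
    next
      case f2: False
      then have "\<alpha> \<union> \<beta> \<noteq> \<omega>" for \<beta> by auto
      then show ?thesis by (subst if_not_P[OF False]) simp
    qed
  qed
  have "munion E (loopO1 E t C) (perc E ?p) \<omega>
      = (\<Sum>\<alpha>\<in>Pow E. if \<alpha> \<subseteq> \<omega> \<and> bdry \<alpha> = C then phi E t \<omega> \<alpha> / Zl E t C else 0)"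
    unfolding munion_def by (rule sum.cong[OF refl], rule inner)
  also have "\<dots> = Wsum E t C \<omega> / Zl E t C"
    unfolding Wsum_def sum_divide_distrib by (rule sum.cong) auto
  finally show ?thesis .
qed

lemma munion_total:
  assumes fin: "finite E"
  shows "(\<Sum>\<omega>\<in>Pow E. munion E \<pi> \<nu> \<omega>) = (\<Sum>\<alpha>\<in>Pow E. \<pi> \<alpha>) * (\<Sum>\<beta>\<in>Pow E. \<nu> \<beta>)"
proof -
  have fP: "finite (Pow E)" using fin by simp
  have "(\<Sum>\<omega>\<in>Pow E. munion E \<pi> \<nu> \<omega>)
     = (\<Sum>\<alpha>\<in>Pow E. \<Sum>\<omega>\<in>Pow E. \<Sum>\<beta>\<in>Pow E. if \<alpha> \<union> \<beta> = \<omega> then \<pi> \<alpha> * \<nu> \<beta> else 0)"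
    unfolding munion_def by (rule sum.swap)
  also have "\<dots> = (\<Sum>\<alpha>\<in>Pow E. \<Sum>\<beta>\<in>Pow E. \<Sum>\<omega>\<in>Pow E. if \<alpha> \<union> \<beta> = \<omega> then \<pi> \<alpha> * \<nu> \<beta> else 0)"
    by (rule sum.cong[OF refl], rule sum.swap)
  also have "\<dots> = (\<Sum>\<alpha>\<in>Pow E. \<Sum>\<beta>\<in>Pow E. \<pi> \<alpha> * \<nu> \<beta>)"
    by (rule sum.cong[OF refl], rule sum.cong[OF refl]) (use fP in auto)
  also have "\<dots> = (\<Sum>\<alpha>\<in>Pow E. \<pi> \<alpha>) * (\<Sum>\<beta>\<in>Pow E. \<nu> \<beta>)"
    by (simp add: sum_product)
  finally show ?thesis .
qed

lemma perc_total:
  assumes fin: "finite E"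
  shows "(\<Sum>\<beta>\<in>Pow E. perc E p \<beta>) = 1"
proof -
  have "(\<Sum>\<beta>\<in>Pow E. perc E p \<beta>) = (\<Sum>\<beta>\<in>{X. {} \<subseteq> X \<and> X \<subseteq> E}. \<Prod>e\<in>E. if e\<in>\<beta> then p e else 1 - p e)"
    by (rule sum.cong) (auto intro: perc_E[OF fin])
  also have "\<dots> = (\<Prod>e\<in>E. if e\<in>{} then p e else p e + (1 - p e))"
    by (rule G0[OF fin]) auto
  finally show ?thesis by simp
qed

lemma loop_total:
  assumes fin: "finite E" and Z: "Zl E t C \<noteq> 0"
  shows "(\<Sum>\<alpha>\<in>Pow E. loopO1 E t C \<alpha>) = 1"
proof -
  have "(\<Sum>\<alpha>\<in>Pow E. loopO1 E t C \<alpha>) = (\<Sum>\<alpha>\<in>Pow E. (if bdry \<alpha> = C then (\<Prod>e\<in>\<alpha>. t e) else 0) / Zl E t C)"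
    by (rule sum.cong) (auto simp: loopO1_def Zl_def)
  also have "\<dots> = Zl E t C / Zl E t C"
    by (simp add: sum_divide_distrib[symmetric] Zl_def)
  finally show ?thesis using Z by simp
qed

lemma dirac_total:
  assumes fin: "finite E" and "\<eta> \<subseteq> E"
  shows "(\<Sum>\<beta>\<in>Pow E. dirac \<eta> \<beta>) = 1"
  using assms by (simp add: dirac_def)

lemma munion_dirac:
  assumes fin: "finite E" and eE: "\<eta> \<subseteq> E" and wE: "\<omega> \<subseteq> E"
  shows "munion E M (dirac \<eta>) \<omega> = (if \<eta> \<subseteq> \<omega> then (\<Sum>\<gamma>\<in>{\<gamma>. \<omega> - \<eta> \<subseteq> \<gamma> \<and> \<gamma> \<subseteq> \<omega>}. M \<gamma>) else 0)"
proof -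
  have fP: "finite (Pow E)" using fin by simp
  have "munion E M (dirac \<eta>) \<omega> = (\<Sum>\<gamma>\<in>Pow E. if \<gamma> \<union> \<eta> = \<omega> then M \<gamma> else 0)"
    unfolding munion_def
  proof (rule sum.cong[OF refl])
    fix \<gamma> assume "\<gamma> \<in> Pow E"
    have "(\<Sum>\<beta>\<in>Pow E. if \<gamma> \<union> \<beta> = \<omega> then M \<gamma> * dirac \<eta> \<beta> else 0)
        = (\<Sum>\<beta>\<in>Pow E. if \<beta> = \<eta> then (if \<gamma> \<union> \<eta> = \<omega> then M \<gamma> else 0) else 0)"
      by (rule sum.cong) (auto simp: dirac_def)
    also have "\<dots> = (if \<gamma> \<union> \<eta> = \<omega> then M \<gamma> else 0)"
      using fP eE by simp
    finally show "(\<Sum>\<beta>\<in>Pow E. if \<gamma> \<union> \<beta> = \<omega> then M \<gamma> * dirac \<eta> \<beta> else 0) = (if \<gamma> \<union> \<eta> = \<omega> then M \<gamma> else 0)" .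
  qed
  also have "\<dots> = (\<Sum>\<gamma>\<in>{\<gamma>\<in>Pow E. \<gamma> \<union> \<eta> = \<omega>}. M \<gamma>)"
    unfolding sum.inter_filter[OF fP] by (rule sum.cong) auto
  also have "{\<gamma>\<in>Pow E. \<gamma> \<union> \<eta> = \<omega>} = (if \<eta> \<subseteq> \<omega> then {\<gamma>. \<omega> - \<eta> \<subseteq> \<gamma> \<and> \<gamma> \<subseteq> \<omega>} else {})"
    using wE by auto
  finally show ?thesis by simp
qed



lemma t2_facts:
  fixes x :: real
  assumes "0 < x" "x < 1"
  shows "0 < x\<^sup>2" "x\<^sup>2 < 1" "0 < 1 - x\<^sup>2"
proof -
  have "x * x < x" using mult_strict_left_mono[OF assms(2) assms(1)] by simp
  then have "x * x < 1" using assms(2) by linarith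
  then show "x\<^sup>2 < 1" "0 < 1 - x\<^sup>2" by (simp_all add: power2_eq_square)
  show "0 < x\<^sup>2" using assms by simp
qed

lemma phi_pos:
  assumes "\<forall>e\<in>E. 0 < t e \<and> t e < 1"
  shows "0 < phi E t \<omega> \<delta>"
  unfolding phi_def
  by (rule prod_pos) (use assms t2_facts in auto)

lemma Wsum_nonneg:
  assumes "\<forall>e\<in>E. 0 < t e \<and> t e < 1"
  shows "0 \<le> Wsum E t C \<omega>"
  unfolding Wsum_def by (rule sum_nonneg) (use phi_pos[OF assms] in \<open>auto intro: less_imp_le\<close>)

lemma Wsum_pos:
  assumes fin: "finite E" and t: "\<forall>e\<in>E. 0 < t e \<and> t e < 1"
    and w: "\<omega> \<subseteq> E" and d: "\<delta> \<subseteq> \<omega>" "bdry \<delta> = C"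
  shows "0 < Wsum E t C \<omega>"
  unfolding Wsum_def
proof (rule sum_pos2[where i=\<delta>])
  show "finite (Pow E)" using fin by simp
  show "\<delta> \<in> Pow E" using w d by auto
  show "0 < (if \<delta> \<subseteq> \<omega> \<and> bdry \<delta> = C then phi E t \<omega> \<delta> else 0)" using d phi_pos[OF t] by simp
  show "\<And>i. i \<in> Pow E \<Longrightarrow> 0 \<le> (if i \<subseteq> \<omega> \<and> bdry i = C then phi E t \<omega> i else 0)"
    using phi_pos[OF t] by (simp add: less_imp_le)
qed

lemma Zl_pos:
  assumes fin: "finite E" and t: "\<forall>e\<in>E. 0 < t e \<and> t e < 1"
    and F: "F \<subseteq> E" "bdry F = C"
  shows "0 < Zl E t C"
  unfolding Zl_def
proof (rule sum_pos2[where i=F])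
  show "finite (Pow E)" using fin by simp
  show "F \<in> Pow E" using F by auto
  have "0 < (\<Prod>e\<in>F. t e)" by (rule prod_pos) (use t F in auto)
  then show "0 < (if bdry F = C then (\<Prod>e\<in>F. t e) else 0)" using F by simp
  show "0 \<le> (if bdry i = C then (\<Prod>e\<in>i. t e) else 0)" if "i \<in> Pow E" for i
  proof -
    have "0 \<le> (\<Prod>e\<in>i. t e)" by (rule prod_nonneg) (use t that in \<open>auto intro: less_imp_le\<close>)
    then show ?thesis by simp
  qed
qed

lemma key_I:
  assumes fin: "finite E" and eta: "\<eta> \<subseteq> \<omega>" and wE: "\<omega> \<subseteq> E" and bA: "bdry \<eta> = A"
    and ZB: "Zl E t B \<noteq> 0"
  shows "Wsum E t (symd A B) \<omega> = (\<Prod>e\<in>\<eta>. t e) * Zl E t B *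
           munion E (munion E (loopO1 E t B) (perc E (\<lambda>e. (t e)\<^sup>2))) (dirac \<eta>) \<omega>"
proof -
  let ?p = "\<lambda>e. (t e)\<^sup>2"
  let ?I = "{\<gamma>. \<omega> - \<eta> \<subseteq> \<gamma> \<and> \<gamma> \<subseteq> \<omega>}"
  let ?F = "\<lambda>\<alpha> e. if e \<in> \<alpha> then t e else ?p e"
  let ?Gr = "\<lambda>\<alpha>. \<Prod>e\<in>E. if e\<in>(\<omega>-\<eta>)\<union>\<alpha> then ?F \<alpha> e else if e\<in>\<omega> then ?F \<alpha> e + (1 - ?p e) else 1 - ?p e"
  have fP: "finite (Pow E)" using fin by simp
  have fI: "finite ?I" using wE fin by (rule_tac finite_subset[OF _ fP]) auto
  have eE: "\<eta> \<subseteq> E" using eta wE by auto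
  have tpe: "(\<Prod>e\<in>\<eta>. t e) = (\<Prod>e\<in>E. if e\<in>\<eta> then t e else 1)"
    by (rule prod_sub_E[OF fin eE])
  have "munion E (munion E (loopO1 E t B) (perc E ?p)) (dirac \<eta>) \<omega>
      = (\<Sum>\<gamma>\<in>?I. munion E (loopO1 E t B) (perc E ?p) \<gamma>)"
    using munion_dirac[OF fin eE wE] eta by simp
  also have "\<dots> = (\<Sum>\<gamma>\<in>?I. Wsum E t B \<gamma> / Zl E t B)"
    by (rule sum.cong[OF refl], rule munion_W[OF fin]) (use wE in auto)
  finally have r1: "Zl E t B * munion E (munion E (loopO1 E t B) (perc E ?p)) (dirac \<eta>) \<omega>
      = (\<Sum>\<gamma>\<in>?I. Wsum E t B \<gamma>)"
    using ZB by (simp add: sum_divide_distrib[symmetric])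
  have "(\<Sum>\<gamma>\<in>?I. Wsum E t B \<gamma>)
      = (\<Sum>\<alpha>\<in>Pow E. \<Sum>\<gamma>\<in>?I. if \<alpha> \<subseteq> \<gamma> \<and> bdry \<alpha> = B then phi E t \<gamma> \<alpha> else 0)"
    unfolding Wsum_def by (rule sum.swap)
  also have "\<dots> = (\<Sum>\<alpha>\<in>Pow E. if \<alpha> \<subseteq> \<omega> \<and> bdry \<alpha> = B then ?Gr \<alpha> else 0)"
  proof (rule sum.cong[OF refl])
    fix \<alpha> assume aE: "\<alpha> \<in> Pow E"
    show "(\<Sum>\<gamma>\<in>?I. if \<alpha> \<subseteq> \<gamma> \<and> bdry \<alpha> = B then phi E t \<gamma> \<alpha> else 0)
        = (if \<alpha> \<subseteq> \<omega> \<and> bdry \<alpha> = B then ?Gr \<alpha> else 0)"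
    proof (cases "\<alpha> \<subseteq> \<omega> \<and> bdry \<alpha> = B")
      case True
      have "(\<Sum>\<gamma>\<in>?I. if \<alpha> \<subseteq> \<gamma> \<and> bdry \<alpha> = B then phi E t \<gamma> \<alpha> else 0)
          = (\<Sum>\<gamma>\<in>{\<gamma>\<in>?I. \<alpha> \<subseteq> \<gamma>}. phi E t \<gamma> \<alpha>)"
        unfolding sum.inter_filter[OF fI] by (rule sum.cong) (use True in auto)
      also have "{\<gamma>\<in>?I. \<alpha> \<subseteq> \<gamma>} = {\<gamma>. (\<omega>-\<eta>)\<union>\<alpha> \<subseteq> \<gamma> \<and> \<gamma> \<subseteq> \<omega>}" by auto
      also have "(\<Sum>\<gamma>\<in>{\<gamma>. (\<omega>-\<eta>)\<union>\<alpha> \<subseteq> \<gamma> \<and> \<gamma> \<subseteq> \<omega>}. phi E t \<gamma> \<alpha>)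
          = (\<Sum>\<gamma>\<in>{\<gamma>. (\<omega>-\<eta>)\<union>\<alpha> \<subseteq> \<gamma> \<and> \<gamma> \<subseteq> \<omega>}. \<Prod>e\<in>E. if e\<in>\<gamma> then ?F \<alpha> e else 1 - ?p e)"
        unfolding phi_def by (rule sum.cong[OF refl], rule prod.cong[OF refl]) auto
      also have "\<dots> = ?Gr \<alpha>"
        by (rule G[OF fin]) (use True wE in auto)
      finally show ?thesis using True by simp
    next
      case False
      then have "\<not> (\<alpha> \<subseteq> \<gamma> \<and> bdry \<alpha> = B)" if "\<gamma> \<in> ?I" for \<gamma> using that by auto
      then have "(\<Sum>\<gamma>\<in>?I. if \<alpha> \<subseteq> \<gamma> \<and> bdry \<alpha> = B then phi E t \<gamma> \<alpha> else 0) = 0"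
        by (intro sum.neutral) auto
      then show ?thesis by (subst if_not_P[OF False]) simp
    qed
  qed
  finally have r2: "(\<Sum>\<gamma>\<in>?I. Wsum E t B \<gamma>) = (\<Sum>\<alpha>\<in>Pow E. if \<alpha> \<subseteq> \<omega> \<and> bdry \<alpha> = B then ?Gr \<alpha> else 0)" .
  have "Wsum E t (symd A B) \<omega>
      = (\<Sum>\<alpha>\<in>Pow E. if symd \<eta> \<alpha> \<subseteq> \<omega> \<and> bdry (symd \<eta> \<alpha>) = symd A B then phi E t \<omega> (symd \<eta> \<alpha>) else 0)"
    unfolding Wsum_def
  proof (rule sum.reindex_bij_witness[where i="symd \<eta>" and j="symd \<eta>"])
    show "\<And>a. a \<in> Pow E \<Longrightarrow> symd \<eta> (symd \<eta> a) = a" by (simp add: symd_symd)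
    show "\<And>a. a \<in> Pow E \<Longrightarrow> symd \<eta> a \<in> Pow E" using eE by (auto simp: symd_def)
    show "\<And>a. a \<in> Pow E \<Longrightarrow> symd \<eta> (symd \<eta> a) = a" by (simp add: symd_symd)
    show "\<And>a. a \<in> Pow E \<Longrightarrow> symd \<eta> a \<in> Pow E" using eE by (auto simp: symd_def)
  qed (simp add: symd_symd)
  also have "\<dots> = (\<Sum>\<alpha>\<in>Pow E. if \<alpha> \<subseteq> \<omega> \<and> bdry \<alpha> = B then (\<Prod>e\<in>\<eta>. t e) * ?Gr \<alpha> else 0)"
  proof (rule sum.cong[OF refl])
    fix \<alpha> assume aE: "\<alpha> \<in> Pow E"
    have fa: "finite \<alpha>" "finite \<eta>" using aE eE fin finite_subset by auto
    have c1: "symd \<eta> \<alpha> \<subseteq> \<omega> \<longleftrightarrow> \<alpha> \<subseteq> \<omega>" using eta by (auto simp: symd_def)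
    have c2: "bdry (symd \<eta> \<alpha>) = symd A B \<longleftrightarrow> bdry \<alpha> = B"
    proof
      assume "bdry (symd \<eta> \<alpha>) = symd A B"
      then have "symd A (bdry \<alpha>) = symd A B" using bdry_symd[OF fa(2) fa(1)] bA by simp
      then have "symd A (symd A (bdry \<alpha>)) = symd A (symd A B)" by simp
      then show "bdry \<alpha> = B" by (simp add: symd_symd)
    qed (use bdry_symd[OF fa(2) fa(1)] bA in simp)
    have c3: "phi E t \<omega> (symd \<eta> \<alpha>) = (\<Prod>e\<in>\<eta>. t e) * ?Gr \<alpha>" if "\<alpha> \<subseteq> \<omega>"
      unfolding tpe phi_def prod.distrib[symmetric]
      by (rule prod.cong[OF refl]) (use that eta in \<open>auto simp: mem_symd power2_eq_square\<close>)
    show "(if symd \<eta> \<alpha> \<subseteq> \<omega> \<and> bdry (symd \<eta> \<alpha>) = symd A B then phi E t \<omega> (symd \<eta> \<alpha>) else 0)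
        = (if \<alpha> \<subseteq> \<omega> \<and> bdry \<alpha> = B then (\<Prod>e\<in>\<eta>. t e) * ?Gr \<alpha> else 0)"
      using c1 c2 c3 by auto
  qed
  also have "\<dots> = (\<Prod>e\<in>\<eta>. t e) * (\<Sum>\<alpha>\<in>Pow E. if \<alpha> \<subseteq> \<omega> \<and> bdry \<alpha> = B then ?Gr \<alpha> else 0)"
    by (simp add: sum_distrib_left if_distrib cong: if_cong)
  finally show ?thesis using r1 r2 by (simp add: mult.assoc)
qed



lemma has_sum_times_nonneg:
  fixes f :: "'a \<Rightarrow> real" and g :: "'b \<Rightarrow> real"
  assumes hf: "(f has_sum a) A" and hg: "(g has_sum b) B"
    and f0: "\<And>x. x \<in> A \<Longrightarrow> 0 \<le> f x" and g0: "\<And>y. y \<in> B \<Longrightarrow> 0 \<le> g y"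
  shows "((\<lambda>(x,y). f x * g y) has_sum (a * b)) (A \<times> B)"
proof (rule has_sum_SigmaI)
  show "((\<lambda>y. (\<lambda>(x,y). f x * g y) (x, y)) has_sum f x * b) B" if "x \<in> A" for x
    using has_sum_cmult_right[OF hg, of "f x"] by simp
  show "((\<lambda>x. f x * b) has_sum a * b) A"
    by (rule has_sum_cmult_left[OF hf])
  show "(\<lambda>(x,y). f x * g y) summable_on A \<times> B"
  proof (rule nonneg_bdd_above_summable_on)
    show "0 \<le> (\<lambda>(x,y). f x * g y) z" if "z \<in> A \<times> B" for z
      using that f0 g0 by auto
    show "bdd_above (sum (\<lambda>(x,y). f x * g y) ` {F. F \<subseteq> A \<times> B \<and> finite F})"
    proof (rule bdd_aboveI2)
      fix F assume F: "F \<in> {F. F \<subseteq> A \<times> B \<and> finite F}"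
      then have fF: "finite F" and FAB: "F \<subseteq> A \<times> B" by auto
      have s1: "fst ` F \<subseteq> A" "snd ` F \<subseteq> B" using FAB by auto
      have "sum (\<lambda>(x,y). f x * g y) F \<le> sum (\<lambda>(x,y). f x * g y) (fst ` F \<times> snd ` F)"
      proof (rule sum_mono2)
        show "finite (fst ` F \<times> snd ` F)" using fF by simp
        show "F \<subseteq> fst ` F \<times> snd ` F" by force
        show "0 \<le> (\<lambda>(x,y). f x * g y) z" if "z \<in> fst ` F \<times> snd ` F - F" for z
          using that s1 f0 g0 by (auto intro!: mult_nonneg_nonneg)
      qed
      also have "\<dots> = sum f (fst ` F) * sum g (snd ` F)"
        by (simp add: sum_product sum.cartesian_product)
      also have "\<dots> \<le> a * b"
      proof (rule mult_mono)
        show "sum f (fst ` F) \<le> a"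
          by (rule finite_sum_le_has_sum[OF hf]) (use fF s1 f0 in auto)
        show "sum g (snd ` F) \<le> b"
          by (rule finite_sum_le_has_sum[OF hg]) (use fF s1 g0 in auto)
        show "0 \<le> a" using has_sum_nonneg[OF hf] f0 by auto
        show "0 \<le> sum g (snd ` F)" using s1 g0 by (auto intro!: sum_nonneg)
      qed
      finally show "sum (\<lambda>(x,y). f x * g y) F \<le> a * b" .
    qed
  qed
qed

lemma has_sum_prodfun:
  fixes f :: "'a \<Rightarrow> nat \<Rightarrow> real"
  assumes "finite A" "\<And>a k. a \<in> A \<Longrightarrow> 0 \<le> f a k" "\<And>a. a \<in> A \<Longrightarrow> (f a has_sum s a) (S a)"
  shows "((\<lambda>n. \<Prod>a\<in>A. f a (n a)) has_sum (\<Prod>a\<in>A. s a))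
           {n. (\<forall>a\<in>A. n a \<in> S a) \<and> (\<forall>a. a \<notin> A \<longrightarrow> n a = 0)}"
  using assms
proof (induction A rule: finite_induct)
  case empty
  have "{n :: 'a \<Rightarrow> nat. (\<forall>a\<in>{}. n a \<in> S a) \<and> (\<forall>a. a \<notin> {} \<longrightarrow> n a = 0)} = {\<lambda>_. 0}"
    by (auto simp: fun_eq_iff)
  then show ?case by (simp add: has_sum_finiteI)
next
  case (insert x F)
  let ?SF = "{n. (\<forall>a\<in>F. n a \<in> S a) \<and> (\<forall>a. a \<notin> F \<longrightarrow> n a = 0)}"
  let ?S = "{n. (\<forall>a\<in>insert x F. n a \<in> S a) \<and> (\<forall>a. a \<notin> insert x F \<longrightarrow> n a = 0)}"
  let ?h = "\<lambda>(n, k). n(x := k)"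
  have IH: "((\<lambda>n. \<Prod>a\<in>F. f a (n a)) has_sum (\<Prod>a\<in>F. s a)) ?SF"
    using insert by auto
  have img: "?S = ?h ` (?SF \<times> S x)"
  proof
    show "?S \<subseteq> ?h ` (?SF \<times> S x)"
    proof
      fix n assume n: "n \<in> ?S"
      then have "(n(x := 0), n x) \<in> ?SF \<times> S x" using insert.hyps by auto
      moreover have "n = ?h (n(x := 0), n x)" by simp
      ultimately show "n \<in> ?h ` (?SF \<times> S x)" by blast
    qed
    show "?h ` (?SF \<times> S x) \<subseteq> ?S" using insert.hyps by auto
  qed
  have inj: "inj_on ?h (?SF \<times> S x)"
  proof (rule inj_onI)
    fix p q assume p: "p \<in> ?SF \<times> S x" and q: "q \<in> ?SF \<times> S x" and e: "?h p = ?h q"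
    obtain n k where pn: "p = (n, k)" by fastforce
    obtain n' k' where qn: "q = (n', k')" by fastforce
    have "n x = 0" "n' x = 0" using p q pn qn insert.hyps by auto
    moreover have e': "n(x := k) = n'(x := k')" using e pn qn by simp
    ultimately have nn: "n = (n(x := k))(x := 0)" "n' = (n'(x := k'))(x := 0)" by (auto simp: fun_eq_iff)
    have "k = k'" using fun_cong[OF e', of x] by simp
    moreover have "n = n'" using nn e' by metis
    ultimately have "n = n'" "k = k'" by auto
    then show "p = q" using pn qn by simp
  qed
  have prodeq: "(\<Prod>a\<in>insert x F. f a ((n(x := k)) a)) = (\<Prod>a\<in>F. f a (n a)) * f x k" for n k
  proof -
    have "(\<Prod>a\<in>F. f a ((n(x := k)) a)) = (\<Prod>a\<in>F. f a (n a))"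
      by (rule prod.cong) (use insert.hyps in auto)
    then show ?thesis using insert.hyps by (simp add: mult.commute)
  qed
  have "((\<lambda>(n, k). (\<Prod>a\<in>F. f a (n a)) * f x k) has_sum ((\<Prod>a\<in>F. s a) * s x)) (?SF \<times> S x)"
    by (rule has_sum_times_nonneg[OF IH insert.prems(2)[of x]]) (use insert.prems in \<open>auto intro!: prod_nonneg\<close>)
  moreover have feq: "((\<lambda>n. \<Prod>a\<in>insert x F. f a (n a)) \<circ> ?h) = (\<lambda>(n, k). (\<Prod>a\<in>F. f a (n a)) * f x k)"
  proof (rule ext)
    fix p :: "('a \<Rightarrow> nat) \<times> nat"
    obtain n k where p: "p = (n, k)" by fastforce
    show "((\<lambda>n. \<Prod>a\<in>insert x F. f a (n a)) \<circ> ?h) p = (\<lambda>(n, k). (\<Prod>a\<in>F. f a (n a)) * f x k) p"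
      unfolding p using prodeq[of n k] by simp
  qed
  ultimately have "(((\<lambda>n. \<Prod>a\<in>insert x F. f a (n a)) \<circ> ?h) has_sum ((\<Prod>a\<in>F. s a) * s x)) (?SF \<times> S x)"
    by simp
  then have "((\<lambda>n. \<Prod>a\<in>insert x F. f a (n a)) has_sum ((\<Prod>a\<in>F. s a) * s x)) ?S"
    unfolding img by (subst has_sum_reindex[OF inj])
  then show ?case using insert.hyps by (simp add: mult.commute)
qed

lemma poisson_odd:
  fixes J :: real
  assumes "0 \<le> J"
  shows "((\<lambda>k. exp (- J) * J ^ k / fact k) has_sum (exp (- J) * sinh J)) {k. odd k}"
proof -
  have "((\<lambda>n. if even n then 0 else J ^ n /\<^sub>R fact n) has_sum sinh J) UNIV"
    by (rule sums_nonneg_imp_has_sum[OF sinh_converges]) (use assms in auto)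
  then have "((\<lambda>n. J ^ n / fact n) has_sum sinh J) {k. odd k}"
    by (subst (asm) has_sum_cong_neutral[where T="{k. odd k}" and g="\<lambda>n. J ^ n / fact n"])
       (auto simp: field_simps)
  from has_sum_cmult_right[OF this, of "exp (- J)"] show ?thesis by simp
qed

lemma poisson_evenpos:
  fixes J :: real
  assumes "0 \<le> J"
  shows "((\<lambda>k. exp (- J) * J ^ k / fact k) has_sum (exp (- J) * (cosh J - 1))) {k. even k \<and> k \<noteq> 0}"
proof -
  have "(\<lambda>n. (if even n then J ^ n /\<^sub>R fact n else 0) - (if n = 0 then 1 else 0)) sums (cosh J - 1)"
    by (rule sums_diff[OF cosh_converges]) (use sums_single[of 0 "\<lambda>_. 1::real"] in simp)
  then have "((\<lambda>n. (if even n then J ^ n /\<^sub>R fact n else 0) - (if n = 0 then 1 else 0)) has_sum (cosh J - 1)) UNIV"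
    by (rule sums_nonneg_imp_has_sum) (use assms in auto)
  then have "((\<lambda>n. J ^ n / fact n) has_sum (cosh J - 1)) {k. even k \<and> k \<noteq> 0}"
    by (subst (asm) has_sum_cong_neutral[where T="{k. even k \<and> k \<noteq> 0}" and g="\<lambda>n. J ^ n / fact n"])
       (auto simp: field_simps)
  from has_sum_cmult_right[OF this, of "exp (- J)"] show ?thesis by simp
qed

lemma poisson_zero:
  fixes J :: real
  shows "((\<lambda>k. exp (- J) * J ^ k / fact k) has_sum (exp (- J))) {0}"
  by (rule has_sum_finiteI) auto



definition Sset :: "'v set set \<Rightarrow> 'v set set \<Rightarrow> 'v set \<Rightarrow> nat set" where
  "Sset \<alpha> \<omega> e = (if e \<in> \<alpha> then {k. odd k} else if e \<in> \<omega> then {k. even k \<and> k \<noteq> 0} else {0})"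

definition Cset :: "'v set set \<Rightarrow> 'v set set \<Rightarrow> 'v set set \<Rightarrow> ('v set \<Rightarrow> nat) set" where
  "Cset E \<alpha> \<omega> = {n. (\<forall>e\<in>E. n e \<in> Sset \<alpha> \<omega> e) \<and> (\<forall>e. e \<notin> E \<longrightarrow> n e = 0)}"

definition hval :: "('v set \<Rightarrow> real) \<Rightarrow> 'v set set \<Rightarrow> 'v set set \<Rightarrow> 'v set \<Rightarrow> real" where
  "hval J \<alpha> \<omega> e = exp (- J e) * (if e \<in> \<alpha> then sinh (J e) else if e \<in> \<omega> then cosh (J e) - 1 else 1)"

lemma Cset_has_sum:
  assumes fin: "finite E" and J: "\<forall>e\<in>E. 0 \<le> J e"
  shows "(poisson_weight E J has_sum (\<Prod>e\<in>E. hval J \<alpha> \<omega> e)) (Cset E \<alpha> \<omega>)"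
proof -
  have "((\<lambda>n. \<Prod>e\<in>E. (\<lambda>e k. exp (- J e) * J e ^ k / fact k) e (n e)) has_sum (\<Prod>e\<in>E. hval J \<alpha> \<omega> e))
           {n. (\<forall>e\<in>E. n e \<in> Sset \<alpha> \<omega> e) \<and> (\<forall>e. e \<notin> E \<longrightarrow> n e = 0)}"
  proof (rule has_sum_prodfun[OF fin])
    show "0 \<le> exp (- J e) * J e ^ k / fact k" if "e \<in> E" for e k using J that by auto
    show "((\<lambda>k. exp (- J e) * J e ^ k / fact k) has_sum hval J \<alpha> \<omega> e) (Sset \<alpha> \<omega> e)" if "e \<in> E" for e
      using poisson_odd[of "J e"] poisson_evenpos[of "J e"] poisson_zero[of "J e"] J that
      by (auto simp: Sset_def hval_def)
  qed
  then show ?thesis unfolding poisson_weight_def Cset_def by simp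
qed

lemma csrc_par:
  assumes fin: "finite E"
  shows "csrc E n = bdry {e\<in>E. odd (n e)}"
proof -
  have "odd (\<Sum>e\<in>{e\<in>E. v \<in> e}. n e) \<longleftrightarrow> odd (card {e\<in>{e\<in>E. odd (n e)}. v \<in> e})" for v
  proof -
    have "{a \<in> {e\<in>E. v \<in> e}. odd (n a)} = {e\<in>{e\<in>E. odd (n e)}. v \<in> e}" by auto
    then show ?thesis using even_sum_iff[of "{e\<in>E. v \<in> e}" n] fin by simp
  qed
  then show ?thesis unfolding csrc_def bdry_def by simp
qed

lemma num_decomp:
  assumes fin: "finite E" and w: "\<omega> \<subseteq> E"
  shows "{n\<in>currents E. csrc E n = C \<and> {e\<in>E. n e > 0} = \<omega>}
       = (\<Union>\<alpha>\<in>{\<alpha>\<in>Pow E. \<alpha> \<subseteq> \<omega> \<and> bdry \<alpha> = C}. Cset E \<alpha> \<omega>)"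
proof
  show "{n\<in>currents E. csrc E n = C \<and> {e\<in>E. n e > 0} = \<omega>} \<subseteq> (\<Union>\<alpha>\<in>{\<alpha>\<in>Pow E. \<alpha> \<subseteq> \<omega> \<and> bdry \<alpha> = C}. Cset E \<alpha> \<omega>)"
  proof
    fix n assume n: "n \<in> {n\<in>currents E. csrc E n = C \<and> {e\<in>E. n e > 0} = \<omega>}"
    let ?a = "{e\<in>E. odd (n e)}"
    have a1: "?a \<in> Pow E" by auto
    have a2: "?a \<subseteq> \<omega>" using n by (auto intro!: odd_pos)
    have a3: "bdry ?a = C" using n csrc_par[OF fin, of n] by simp
    have "n \<in> Cset E ?a \<omega>"
      using n unfolding Cset_def Sset_def currents_def by auto
    then show "n \<in> (\<Union>\<alpha>\<in>{\<alpha>\<in>Pow E. \<alpha> \<subseteq> \<omega> \<and> bdry \<alpha> = C}. Cset E \<alpha> \<omega>)" using a1 a2 a3 by blast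
  qed
  show "(\<Union>\<alpha>\<in>{\<alpha>\<in>Pow E. \<alpha> \<subseteq> \<omega> \<and> bdry \<alpha> = C}. Cset E \<alpha> \<omega>) \<subseteq> {n\<in>currents E. csrc E n = C \<and> {e\<in>E. n e > 0} = \<omega>}"
  proof
    fix n assume "n \<in> (\<Union>\<alpha>\<in>{\<alpha>\<in>Pow E. \<alpha> \<subseteq> \<omega> \<and> bdry \<alpha> = C}. Cset E \<alpha> \<omega>)"
    then obtain \<alpha> where a: "\<alpha> \<subseteq> E" "\<alpha> \<subseteq> \<omega>" "bdry \<alpha> = C" and n: "n \<in> Cset E \<alpha> \<omega>" by auto
    have nE: "\<And>e. e \<in> E \<Longrightarrow> n e \<in> Sset \<alpha> \<omega> e" and n0: "\<And>e. e \<notin> E \<Longrightarrow> n e = 0"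
      using n unfolding Cset_def by auto
    have "{e\<in>E. odd (n e)} = \<alpha>"
    proof
      show "{e\<in>E. odd (n e)} \<subseteq> \<alpha>"
      proof
        fix e assume "e \<in> {e\<in>E. odd (n e)}"
        then show "e \<in> \<alpha>" using nE[of e] by (auto simp: Sset_def split: if_splits)
      qed
      show "\<alpha> \<subseteq> {e\<in>E. odd (n e)}"
      proof
        fix e assume e: "e \<in> \<alpha>"
        then have "e \<in> E" using a by auto
        with nE[of e] e show "e \<in> {e\<in>E. odd (n e)}" by (auto simp: Sset_def)
      qed
    qed
    then have "csrc E n = C" using csrc_par[OF fin, of n] a by simp
    moreover have "{e\<in>E. n e > 0} = \<omega>"
    proof
      show "{e\<in>E. n e > 0} \<subseteq> \<omega>"
      proof
        fix e assume "e \<in> {e\<in>E. n e > 0}"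
        then show "e \<in> \<omega>" using nE[of e] a by (auto simp: Sset_def split: if_splits)
      qed
      show "\<omega> \<subseteq> {e\<in>E. n e > 0}"
      proof
        fix e assume e: "e \<in> \<omega>"
        then have "e \<in> E" using w by auto
        then show "e \<in> {e\<in>E. n e > 0}" using nE[of e] e by (auto simp: Sset_def split: if_splits intro: odd_pos)
      qed
    qed
    moreover have "n \<in> currents E" using n0 by (simp add: currents_def)
    ultimately show "n \<in> {n\<in>currents E. csrc E n = C \<and> {e\<in>E. n e > 0} = \<omega>}" by simp
  qed
qed

lemma Cset_disj:
  assumes "\<alpha> \<subseteq> E" "\<alpha>' \<subseteq> E" "\<alpha> \<noteq> \<alpha>'"
  shows "Cset E \<alpha> \<omega> \<inter> Cset E \<alpha>' \<omega> = {}"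
proof -
  obtain e where e: "e \<in> E" "(e \<in> \<alpha>) \<noteq> (e \<in> \<alpha>')" using assms by blast
  show ?thesis
  proof (rule ccontr)
    assume "Cset E \<alpha> \<omega> \<inter> Cset E \<alpha>' \<omega> \<noteq> {}"
    then obtain n where "n \<in> Cset E \<alpha> \<omega>" "n \<in> Cset E \<alpha>' \<omega>" by blast
    then have "n e \<in> Sset \<alpha> \<omega> e" "n e \<in> Sset \<alpha>' \<omega> e" using e unfolding Cset_def by auto
    then show False using e by (auto simp: Sset_def split: if_splits)
  qed
qed

definition Nsum :: "'v set set \<Rightarrow> ('v set \<Rightarrow> real) \<Rightarrow> 'v set \<Rightarrow> 'v set set \<Rightarrow> real" where
  "Nsum E J C \<omega> = (\<Sum>\<alpha>\<in>Pow E. if \<alpha> \<subseteq> \<omega> \<and> bdry \<alpha> = C then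
      (\<Prod>e\<in>E. if e \<in> \<alpha> then sinh (J e) else if e \<in> \<omega> then cosh (J e) - 1 else 1) else 0)"

lemma num_has_sum:
  assumes fin: "finite E" and J: "\<forall>e\<in>E. 0 \<le> J e" and w: "\<omega> \<subseteq> E"
  shows "(poisson_weight E J has_sum ((\<Prod>e\<in>E. exp (- J e)) * Nsum E J C \<omega>))
           {n\<in>currents E. csrc E n = C \<and> {e\<in>E. n e > 0} = \<omega>}"
proof -
  have fP: "finite (Pow E)" using fin by simp
  have "(poisson_weight E J has_sum (\<Sum>\<alpha>\<in>{\<alpha>\<in>Pow E. \<alpha> \<subseteq> \<omega> \<and> bdry \<alpha> = C}. \<Prod>e\<in>E. hval J \<alpha> \<omega> e))
          (\<Union>\<alpha>\<in>{\<alpha>\<in>Pow E. \<alpha> \<subseteq> \<omega> \<and> bdry \<alpha> = C}. Cset E \<alpha> \<omega>)"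
  proof (rule sum_has_sum)
    show "finite {\<alpha>\<in>Pow E. \<alpha> \<subseteq> \<omega> \<and> bdry \<alpha> = C}" using fP by simp
    show "\<And>a. a \<in> {\<alpha>\<in>Pow E. \<alpha> \<subseteq> \<omega> \<and> bdry \<alpha> = C} \<Longrightarrow> (poisson_weight E J has_sum (\<Prod>e\<in>E. hval J a \<omega> e)) (Cset E a \<omega>)"
      using Cset_has_sum[OF fin J] by blast
    show "\<And>a a'. a \<in> {\<alpha>\<in>Pow E. \<alpha> \<subseteq> \<omega> \<and> bdry \<alpha> = C} \<Longrightarrow> a' \<in> {\<alpha>\<in>Pow E. \<alpha> \<subseteq> \<omega> \<and> bdry \<alpha> = C} \<Longrightarrow> a \<noteq> a' \<Longrightarrow> Cset E a \<omega> \<inter> Cset E a' \<omega> = {}"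
      by (rule Cset_disj) auto
  qed
  moreover have "(\<Sum>\<alpha>\<in>{\<alpha>\<in>Pow E. \<alpha> \<subseteq> \<omega> \<and> bdry \<alpha> = C}. \<Prod>e\<in>E. hval J \<alpha> \<omega> e)
      = (\<Prod>e\<in>E. exp (- J e)) * Nsum E J C \<omega>"
    unfolding Nsum_def sum.inter_filter[OF fP] sum_distrib_left
    by (rule sum.cong[OF refl]) (simp add: hval_def prod.distrib)
  ultimately show ?thesis using num_decomp[OF fin w] by simp
qed

lemma den_has_sum:
  assumes fin: "finite E" and J: "\<forall>e\<in>E. 0 \<le> J e"
  shows "(poisson_weight E J has_sum ((\<Prod>e\<in>E. exp (- J e)) * (\<Sum>\<omega>\<in>Pow E. Nsum E J C \<omega>)))
           {n\<in>currents E. csrc E n = C}"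
proof -
  have fP: "finite (Pow E)" using fin by simp
  have "(poisson_weight E J has_sum (\<Sum>\<omega>\<in>Pow E. (\<Prod>e\<in>E. exp (- J e)) * Nsum E J C \<omega>))
          (\<Union>\<omega>\<in>Pow E. {n\<in>currents E. csrc E n = C \<and> {e\<in>E. n e > 0} = \<omega>})"
    by (rule sum_has_sum) (use fP num_has_sum[OF fin J] in auto)
  moreover have "(\<Union>\<omega>\<in>Pow E. {n\<in>currents E. csrc E n = C \<and> {e\<in>E. n e > 0} = \<omega>}) = {n\<in>currents E. csrc E n = C}"
    by auto
  ultimately show ?thesis by (simp add: sum_distrib_left)
qed

lemma single_current_eq:
  assumes fin: "finite E" and J: "\<forall>e\<in>E. 0 \<le> J e" and w: "\<omega> \<subseteq> E"
  shows "single_current E J C \<omega> = Nsum E J C \<omega> / (\<Sum>\<omega>\<in>Pow E. Nsum E J C \<omega>)"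
proof -
  have X: "(\<Prod>e\<in>E. exp (- J e)) \<noteq> 0" by (simp add: prod_pos less_imp_neq[symmetric])
  show ?thesis
    unfolding single_current_def
    using infsumI[OF num_has_sum[OF fin J w, of C]] infsumI[OF den_has_sum[OF fin J, of C]] X
    by simp
qed



lemma sum4_swap:
  "(\<Sum>x\<in>X. \<Sum>y\<in>Y. \<Sum>z\<in>Z. \<Sum>w\<in>W. f x y z w) = (\<Sum>z\<in>Z. \<Sum>w\<in>W. \<Sum>x\<in>X. \<Sum>y\<in>Y. f x y z w)"
proof -
  have "(\<Sum>x\<in>X. \<Sum>y\<in>Y. \<Sum>z\<in>Z. \<Sum>w\<in>W. f x y z w) = (\<Sum>x\<in>X. \<Sum>z\<in>Z. \<Sum>y\<in>Y. \<Sum>w\<in>W. f x y z w)"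
    by (rule sum.cong[OF refl], rule sum.swap)
  also have "\<dots> = (\<Sum>x\<in>X. \<Sum>z\<in>Z. \<Sum>w\<in>W. \<Sum>y\<in>Y. f x y z w)"
    by (rule sum.cong[OF refl], rule sum.cong[OF refl], rule sum.swap)
  also have "\<dots> = (\<Sum>z\<in>Z. \<Sum>x\<in>X. \<Sum>w\<in>W. \<Sum>y\<in>Y. f x y z w)"
    by (rule sum.swap)
  also have "\<dots> = (\<Sum>z\<in>Z. \<Sum>w\<in>W. \<Sum>x\<in>X. \<Sum>y\<in>Y. f x y z w)"
    by (rule sum.cong[OF refl], rule sum.swap)
  finally show ?thesis .
qed

lemma den_eval:
  assumes fin: "finite E"
  shows "(\<Sum>\<omega>\<in>Pow E. Nsum E J C \<omega>) = (\<Prod>e\<in>E. cosh (J e)) * Zl E (\<lambda>e. tanh (J e)) C"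
proof -
  have fP: "finite (Pow E)" using fin by simp
  let ?P = "\<lambda>\<alpha> \<omega>. \<Prod>e\<in>E. if e \<in> \<alpha> then sinh (J e) else if e \<in> \<omega> then cosh (J e) - 1 else 1"
  have "(\<Sum>\<omega>\<in>Pow E. Nsum E J C \<omega>) = (\<Sum>\<alpha>\<in>Pow E. \<Sum>\<omega>\<in>Pow E. if \<alpha> \<subseteq> \<omega> \<and> bdry \<alpha> = C then ?P \<alpha> \<omega> else 0)"
    unfolding Nsum_def by (rule sum.swap)
  also have "\<dots> = (\<Sum>\<alpha>\<in>Pow E. (\<Prod>e\<in>E. cosh (J e)) * (if bdry \<alpha> = C then (\<Prod>e\<in>\<alpha>. tanh (J e)) else 0))"
  proof (rule sum.cong[OF refl])
    fix \<alpha> assume aE: "\<alpha> \<in> Pow E"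
    show "(\<Sum>\<omega>\<in>Pow E. if \<alpha> \<subseteq> \<omega> \<and> bdry \<alpha> = C then ?P \<alpha> \<omega> else 0)
        = (\<Prod>e\<in>E. cosh (J e)) * (if bdry \<alpha> = C then (\<Prod>e\<in>\<alpha>. tanh (J e)) else 0)"
    proof (cases "bdry \<alpha> = C")
      case True
      have "(\<Sum>\<omega>\<in>Pow E. if \<alpha> \<subseteq> \<omega> \<and> bdry \<alpha> = C then ?P \<alpha> \<omega> else 0)
          = (\<Sum>\<omega>\<in>{\<omega>\<in>Pow E. \<alpha> \<subseteq> \<omega>}. ?P \<alpha> \<omega>)"
        unfolding sum.inter_filter[OF fP] by (rule sum.cong) (use True in auto)
      also have "{\<omega>\<in>Pow E. \<alpha> \<subseteq> \<omega>} = {\<omega>. \<alpha> \<subseteq> \<omega> \<and> \<omega> \<subseteq> E}" by auto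
      also have "(\<Sum>\<omega>\<in>{\<omega>. \<alpha> \<subseteq> \<omega> \<and> \<omega> \<subseteq> E}. ?P \<alpha> \<omega>)
          = (\<Sum>\<omega>\<in>{\<omega>. \<alpha> \<subseteq> \<omega> \<and> \<omega> \<subseteq> E}. \<Prod>e\<in>E. if e \<in> \<omega> then (if e \<in> \<alpha> then sinh (J e) else cosh (J e) - 1) else 1)"
        by (rule sum.cong[OF refl], rule prod.cong[OF refl]) auto
      also have "\<dots> = (\<Prod>e\<in>E. if e \<in> \<alpha> then (if e \<in> \<alpha> then sinh (J e) else cosh (J e) - 1) else (if e \<in> \<alpha> then sinh (J e) else cosh (J e) - 1) + 1)"
        by (rule G0[OF fin]) (use aE in auto)
      also have "\<dots> = (\<Prod>e\<in>E. cosh (J e) * (if e \<in> \<alpha> then tanh (J e) else 1))"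
        by (rule prod.cong[OF refl]) (auto simp: tanh_def)
      also have "\<dots> = (\<Prod>e\<in>E. cosh (J e)) * (\<Prod>e\<in>\<alpha>. tanh (J e))"
        using prod_sub_E[OF fin, of \<alpha> "\<lambda>e. tanh (J e)"] aE by (simp add: prod.distrib)
      finally show ?thesis using True by simp
    qed simp
  qed
  also have "\<dots> = (\<Prod>e\<in>E. cosh (J e)) * Zl E (\<lambda>e. tanh (J e)) C"
    unfolding Zl_def by (simp add: sum_distrib_left)
  finally show ?thesis .
qed

lemma edge_K:
  fixes s c :: real and a b w :: bool
  assumes c: "c > 0" "c\<^sup>2 = s\<^sup>2 + 1" and ab: "a \<longrightarrow> w" "b \<longrightarrow> w"
  shows "(if a then (if a then s else c - 1) * (if b then (if b then s else c - 1) else (if b then s else c - 1) + 1)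
          else if w then (if a then s else c - 1) * (if b then (if b then s else c - 1) else (if b then s else c - 1) + 1)
                  + (if w then (if b then s else c - 1) else 1)
          else (if w then (if b then s else c - 1) else 1))
         = c * c * (if a \<noteq> b then s / c else if w then (s / c)\<^sup>2 else 1 - (s / c)\<^sup>2)"
proof -
  have c0: "c \<noteq> 0" using c by simp
  have ss: "s * s = c * c - 1" using c(2) by (simp add: power2_eq_square)
  have h1: "c * c * (s / c) = s * c" using c0 by (simp add: field_simps)
  have h2: "c * c * (s / c)\<^sup>2 = s * s" using c0 by (simp add: field_simps power2_eq_square)
  have h3: "c * c * (1 - (s / c)\<^sup>2) = 1"
  proof -
    have "c * c * (1 - (s / c)\<^sup>2) = c * c - c * c * (s / c)\<^sup>2" by (simp add: algebra_simps)
    also have "\<dots> = c * c - s * s" using h2 by simp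
    also have "\<dots> = 1" using ss by simp
    finally show ?thesis .
  qed
  have r: "c * c * (if a \<noteq> b then s / c else if w then (s / c)\<^sup>2 else 1 - (s / c)\<^sup>2)
      = (if a \<noteq> b then s * c else if w then s * s else 1)"
    by (cases "a \<noteq> b"; cases w) (simp_all add: h1 h2 h3)
  show ?thesis
    unfolding r using ab by (cases a; cases b; cases w) (simp_all add: ss algebra_simps)
qed



lemma quad:
  assumes fin: "finite E" and w: "\<omega> \<subseteq> E"
  shows "(\<Sum>\<omega>1\<in>Pow E. \<Sum>\<omega>2\<in>Pow E. if \<omega>1 \<union> \<omega>2 = \<omega> then Nsum E J A \<omega>1 * Nsum E J B \<omega>2 else 0)
    = (\<Prod>e\<in>E. cosh (J e)) * (\<Prod>e\<in>E. cosh (J e)) *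
      (real (card (fsub A \<omega>)) * Wsum E (\<lambda>e. tanh (J e)) (symd A B) \<omega>)"
proof -
  have fP: "finite (Pow E)" using fin by simp
  let ?s = "\<lambda>e. sinh (J e)" and ?c = "\<lambda>e. cosh (J e)"
  let ?cc = "(\<Prod>e\<in>E. cosh (J e)) * (\<Prod>e\<in>E. cosh (J e))"
  let ?t = "\<lambda>e. tanh (J e)"
  let ?P = "\<lambda>\<alpha> \<omega>'. \<Prod>e\<in>E. if e \<in> \<alpha> then ?s e else if e \<in> \<omega>' then ?c e - 1 else 1"
  let ?T = "\<lambda>\<omega>1 \<omega>2 \<alpha>1 \<alpha>2. if \<omega>1 \<union> \<omega>2 = \<omega> \<and> \<alpha>1 \<subseteq> \<omega>1 \<and> bdry \<alpha>1 = A \<and> \<alpha>2 \<subseteq> \<omega>2 \<and> bdry \<alpha>2 = B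
      then ?P \<alpha>1 \<omega>1 * ?P \<alpha>2 \<omega>2 else 0"
  have step1: "(\<Sum>\<omega>1\<in>Pow E. \<Sum>\<omega>2\<in>Pow E. if \<omega>1 \<union> \<omega>2 = \<omega> then Nsum E J A \<omega>1 * Nsum E J B \<omega>2 else 0)
      = (\<Sum>\<omega>1\<in>Pow E. \<Sum>\<omega>2\<in>Pow E. \<Sum>\<alpha>1\<in>Pow E. \<Sum>\<alpha>2\<in>Pow E. ?T \<omega>1 \<omega>2 \<alpha>1 \<alpha>2)"
  proof (intro sum.cong[OF refl])
    fix \<omega>1 \<omega>2
    show "(if \<omega>1 \<union> \<omega>2 = \<omega> then Nsum E J A \<omega>1 * Nsum E J B \<omega>2 else 0)
        = (\<Sum>\<alpha>1\<in>Pow E. \<Sum>\<alpha>2\<in>Pow E. ?T \<omega>1 \<omega>2 \<alpha>1 \<alpha>2)"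
      by (cases "\<omega>1 \<union> \<omega>2 = \<omega>") (auto simp: Nsum_def sum_product intro!: sum.cong)
  qed
  also have "\<dots> = (\<Sum>\<alpha>1\<in>Pow E. \<Sum>\<alpha>2\<in>Pow E. \<Sum>\<omega>1\<in>Pow E. \<Sum>\<omega>2\<in>Pow E. ?T \<omega>1 \<omega>2 \<alpha>1 \<alpha>2)"
    by (rule sum4_swap)
  also have "\<dots> = (\<Sum>\<alpha>1\<in>Pow E. \<Sum>\<alpha>2\<in>Pow E. if \<alpha>1 \<subseteq> \<omega> \<and> \<alpha>2 \<subseteq> \<omega> \<and> bdry \<alpha>1 = A \<and> bdry \<alpha>2 = B
         then ?cc * phi E ?t \<omega> (symd \<alpha>1 \<alpha>2) else 0)"
  proof (intro sum.cong[OF refl])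
    fix \<alpha>1 \<alpha>2 assume a1E: "\<alpha>1 \<in> Pow E" and a2E: "\<alpha>2 \<in> Pow E"
    show "(\<Sum>\<omega>1\<in>Pow E. \<Sum>\<omega>2\<in>Pow E. ?T \<omega>1 \<omega>2 \<alpha>1 \<alpha>2)
        = (if \<alpha>1 \<subseteq> \<omega> \<and> \<alpha>2 \<subseteq> \<omega> \<and> bdry \<alpha>1 = A \<and> bdry \<alpha>2 = B then ?cc * phi E ?t \<omega> (symd \<alpha>1 \<alpha>2) else 0)"
    proof (cases "\<alpha>1 \<subseteq> \<omega> \<and> \<alpha>2 \<subseteq> \<omega> \<and> bdry \<alpha>1 = A \<and> bdry \<alpha>2 = B")
      case False
      have "?T \<omega>1 \<omega>2 \<alpha>1 \<alpha>2 = 0" for \<omega>1 \<omega>2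
        using False by auto
      then show ?thesis by (subst if_not_P[OF False]) simp
    next
      case True
      then have a1: "\<alpha>1 \<subseteq> \<omega>" and a2: "\<alpha>2 \<subseteq> \<omega>" and bA: "bdry \<alpha>1 = A" and bB: "bdry \<alpha>2 = B" by auto
      let ?F1 = "\<lambda>e. if e \<in> \<alpha>1 then ?s e else ?c e - 1"
      let ?F2 = "\<lambda>e. if e \<in> \<alpha>2 then ?s e else ?c e - 1"
      let ?R = "\<lambda>\<omega>1. \<Prod>e\<in>E. if e \<in> \<alpha>2 \<union> (\<omega> - \<omega>1) then ?F2 e else if e \<in> \<omega> then ?F2 e + 1 else 1"
      let ?X = "\<lambda>e. ?F1 e * (if e \<in> \<alpha>2 then ?F2 e else ?F2 e + 1)"
      let ?Y = "\<lambda>e. if e \<in> \<omega> then ?F2 e else 1"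
      have inner: "(\<Sum>\<omega>2\<in>Pow E. ?T \<omega>1 \<omega>2 \<alpha>1 \<alpha>2) = (if \<alpha>1 \<subseteq> \<omega>1 \<and> \<omega>1 \<subseteq> \<omega> then ?P \<alpha>1 \<omega>1 * ?R \<omega>1 else 0)"
        if o1: "\<omega>1 \<in> Pow E" for \<omega>1
      proof (cases "\<alpha>1 \<subseteq> \<omega>1 \<and> \<omega>1 \<subseteq> \<omega>")
        case True
        have "(\<Sum>\<omega>2\<in>Pow E. ?T \<omega>1 \<omega>2 \<alpha>1 \<alpha>2) = (\<Sum>\<omega>2\<in>{\<omega>2\<in>Pow E. \<omega>1 \<union> \<omega>2 = \<omega> \<and> \<alpha>2 \<subseteq> \<omega>2}. ?P \<alpha>1 \<omega>1 * ?P \<alpha>2 \<omega>2)"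
          unfolding sum.inter_filter[OF fP] by (rule sum.cong) (use True bA bB in auto)
        also have "{\<omega>2\<in>Pow E. \<omega>1 \<union> \<omega>2 = \<omega> \<and> \<alpha>2 \<subseteq> \<omega>2} = {\<omega>2. \<alpha>2 \<union> (\<omega> - \<omega>1) \<subseteq> \<omega>2 \<and> \<omega>2 \<subseteq> \<omega>}"
          using True w a2 by auto
        also have "(\<Sum>\<omega>2\<in>{\<omega>2. \<alpha>2 \<union> (\<omega> - \<omega>1) \<subseteq> \<omega>2 \<and> \<omega>2 \<subseteq> \<omega>}. ?P \<alpha>1 \<omega>1 * ?P \<alpha>2 \<omega>2)
            = ?P \<alpha>1 \<omega>1 * (\<Sum>\<omega>2\<in>{\<omega>2. \<alpha>2 \<union> (\<omega> - \<omega>1) \<subseteq> \<omega>2 \<and> \<omega>2 \<subseteq> \<omega>}. \<Prod>e\<in>E. if e \<in> \<omega>2 then ?F2 e else 1)"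
          unfolding sum_distrib_left
          by (rule sum.cong[OF refl], rule arg_cong2[where f="(*)"], rule refl, rule prod.cong[OF refl]) auto
        also have "(\<Sum>\<omega>2\<in>{\<omega>2. \<alpha>2 \<union> (\<omega> - \<omega>1) \<subseteq> \<omega>2 \<and> \<omega>2 \<subseteq> \<omega>}. \<Prod>e\<in>E. if e \<in> \<omega>2 then ?F2 e else 1) = ?R \<omega>1"
          by (rule G[OF fin]) (use a2 w in auto)
        finally show ?thesis using True by simp
      next
        case False
        have "?T \<omega>1 \<omega>2 \<alpha>1 \<alpha>2 = 0" for \<omega>2 using False by auto
        then show ?thesis by (subst if_not_P[OF False]) simp
      qed
      have "(\<Sum>\<omega>1\<in>Pow E. \<Sum>\<omega>2\<in>Pow E. ?T \<omega>1 \<omega>2 \<alpha>1 \<alpha>2)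
          = (\<Sum>\<omega>1\<in>Pow E. if \<alpha>1 \<subseteq> \<omega>1 \<and> \<omega>1 \<subseteq> \<omega> then ?P \<alpha>1 \<omega>1 * ?R \<omega>1 else 0)"
        by (rule sum.cong[OF refl], rule inner)
      also have "\<dots> = (\<Sum>\<omega>1\<in>{\<omega>1\<in>Pow E. \<alpha>1 \<subseteq> \<omega>1 \<and> \<omega>1 \<subseteq> \<omega>}. ?P \<alpha>1 \<omega>1 * ?R \<omega>1)"
        unfolding sum.inter_filter[OF fP] by (rule sum.cong) auto
      also have "{\<omega>1\<in>Pow E. \<alpha>1 \<subseteq> \<omega>1 \<and> \<omega>1 \<subseteq> \<omega>} = {\<omega>1. \<alpha>1 \<subseteq> \<omega>1 \<and> \<omega>1 \<subseteq> \<omega>}" using w by auto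
      also have "(\<Sum>\<omega>1\<in>{\<omega>1. \<alpha>1 \<subseteq> \<omega>1 \<and> \<omega>1 \<subseteq> \<omega>}. ?P \<alpha>1 \<omega>1 * ?R \<omega>1)
          = (\<Sum>\<omega>1\<in>{\<omega>1. \<alpha>1 \<subseteq> \<omega>1 \<and> \<omega>1 \<subseteq> \<omega>}. \<Prod>e\<in>E. if e \<in> \<omega>1 then ?X e else ?Y e)"
      proof (rule sum.cong[OF refl])
        fix \<omega>1 assume "\<omega>1 \<in> {\<omega>1. \<alpha>1 \<subseteq> \<omega>1 \<and> \<omega>1 \<subseteq> \<omega>}"
        then have o: "\<alpha>1 \<subseteq> \<omega>1" "\<omega>1 \<subseteq> \<omega>" by auto
        show "?P \<alpha>1 \<omega>1 * ?R \<omega>1 = (\<Prod>e\<in>E. if e \<in> \<omega>1 then ?X e else ?Y e)"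
          unfolding prod.distrib[symmetric]
          by (rule prod.cong[OF refl]) (use o a2 in auto)
      qed
      also have "\<dots> = (\<Prod>e\<in>E. if e \<in> \<alpha>1 then ?X e else if e \<in> \<omega> then ?X e + ?Y e else ?Y e)"
        by (rule G[OF fin]) (use a1 w in auto)
      also have "\<dots> = (\<Prod>e\<in>E. ?c e * ?c e * (if e \<in> symd \<alpha>1 \<alpha>2 then ?t e else if e \<in> \<omega> then (?t e)\<^sup>2 else 1 - (?t e)\<^sup>2))"
      proof (rule prod.cong[OF refl])
        fix e assume "e \<in> E"
        have c: "?c e > 0" "(?c e)\<^sup>2 = (?s e)\<^sup>2 + 1" by (simp_all add: cosh_square_eq)
        have ab: "e \<in> \<alpha>1 \<longrightarrow> e \<in> \<omega>" "e \<in> \<alpha>2 \<longrightarrow> e \<in> \<omega>" using a1 a2 by auto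
        show "(if e \<in> \<alpha>1 then ?X e else if e \<in> \<omega> then ?X e + ?Y e else ?Y e)
            = ?c e * ?c e * (if e \<in> symd \<alpha>1 \<alpha>2 then ?t e else if e \<in> \<omega> then (?t e)\<^sup>2 else 1 - (?t e)\<^sup>2)"
          using edge_K[where s="?s e" and c="?c e" and a="e \<in> \<alpha>1" and b="e \<in> \<alpha>2" and w="e \<in> \<omega>", OF c ab]
          by (simp add: mem_symd tanh_def)
      qed
      also have "\<dots> = ?cc * phi E ?t \<omega> (symd \<alpha>1 \<alpha>2)"
        unfolding phi_def by (simp add: prod.distrib)
      finally show ?thesis using True by simp
    qed
  qed
  also have "\<dots> = (\<Sum>\<alpha>1\<in>Pow E. if \<alpha>1 \<subseteq> \<omega> \<and> bdry \<alpha>1 = A then ?cc * Wsum E ?t (symd A B) \<omega> else 0)"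
  proof (rule sum.cong[OF refl])
    fix \<alpha>1 assume a1E: "\<alpha>1 \<in> Pow E"
    show "(\<Sum>\<alpha>2\<in>Pow E. if \<alpha>1 \<subseteq> \<omega> \<and> \<alpha>2 \<subseteq> \<omega> \<and> bdry \<alpha>1 = A \<and> bdry \<alpha>2 = B then ?cc * phi E ?t \<omega> (symd \<alpha>1 \<alpha>2) else 0)
        = (if \<alpha>1 \<subseteq> \<omega> \<and> bdry \<alpha>1 = A then ?cc * Wsum E ?t (symd A B) \<omega> else 0)"
    proof (cases "\<alpha>1 \<subseteq> \<omega> \<and> bdry \<alpha>1 = A")
      case False
      show ?thesis by (subst if_not_P[OF False], intro sum.neutral) (use False in auto)
    next
      case True
      have fa1: "finite \<alpha>1" using a1E fin finite_subset by auto
      have "(\<Sum>\<alpha>2\<in>Pow E. if \<alpha>1 \<subseteq> \<omega> \<and> \<alpha>2 \<subseteq> \<omega> \<and> bdry \<alpha>1 = A \<and> bdry \<alpha>2 = B then ?cc * phi E ?t \<omega> (symd \<alpha>1 \<alpha>2) else 0)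
          = (\<Sum>\<delta>\<in>Pow E. if \<delta> \<subseteq> \<omega> \<and> bdry \<delta> = symd A B then ?cc * phi E ?t \<omega> \<delta> else 0)"
      proof (rule sum.reindex_bij_witness[where i="symd \<alpha>1" and j="symd \<alpha>1"])
        show "\<And>a. a \<in> Pow E \<Longrightarrow> symd \<alpha>1 (symd \<alpha>1 a) = a" by (simp add: symd_symd)
        show "\<And>a. a \<in> Pow E \<Longrightarrow> symd \<alpha>1 a \<in> Pow E" using a1E by (auto simp: symd_def)
        show "\<And>a. a \<in> Pow E \<Longrightarrow> symd \<alpha>1 (symd \<alpha>1 a) = a" by (simp add: symd_symd)
        show "\<And>a. a \<in> Pow E \<Longrightarrow> symd \<alpha>1 a \<in> Pow E" using a1E by (auto simp: symd_def)
        fix a assume aE: "a \<in> Pow E"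
        have fa: "finite a" using aE fin finite_subset by auto
        have c1: "symd \<alpha>1 a \<subseteq> \<omega> \<longleftrightarrow> a \<subseteq> \<omega>" using True by (auto simp: symd_def)
        have c2: "bdry (symd \<alpha>1 a) = symd A B \<longleftrightarrow> bdry a = B"
        proof
          assume "bdry (symd \<alpha>1 a) = symd A B"
          then have "symd A (bdry a) = symd A B" using bdry_symd[OF fa1 fa] True by simp
          then have "symd A (symd A (bdry a)) = symd A (symd A B)" by simp
          then show "bdry a = B" by (simp add: symd_symd)
        qed (use bdry_symd[OF fa1 fa] True in simp)
        show "(if symd \<alpha>1 a \<subseteq> \<omega> \<and> bdry (symd \<alpha>1 a) = symd A B then ?cc * phi E ?t \<omega> (symd \<alpha>1 a) else 0)
            = (if \<alpha>1 \<subseteq> \<omega> \<and> a \<subseteq> \<omega> \<and> bdry \<alpha>1 = A \<and> bdry a = B then ?cc * phi E ?t \<omega> (symd \<alpha>1 a) else 0)"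
          using c1 c2 True by simp
      qed
      also have "\<dots> = ?cc * Wsum E ?t (symd A B) \<omega>"
        unfolding Wsum_def by (simp add: sum_distrib_left if_distrib cong: if_cong)
      finally show ?thesis using True by simp
    qed
  qed
  also have "\<dots> = (\<Sum>\<alpha>1\<in>{\<alpha>1\<in>Pow E. \<alpha>1 \<subseteq> \<omega> \<and> bdry \<alpha>1 = A}. ?cc * Wsum E ?t (symd A B) \<omega>)"
    unfolding sum.inter_filter[OF fP] by (rule sum.cong) auto
  also have "{\<alpha>1\<in>Pow E. \<alpha>1 \<subseteq> \<omega> \<and> bdry \<alpha>1 = A} = fsub A \<omega>"
    using w by (auto simp: fsub_def)
  finally show ?thesis using step1 by simp
qed

lemma DC_eq:
  assumes fin: "finite E" and J: "\<forall>e\<in>E. 0 \<le> J e" and w: "\<omega> \<subseteq> E"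
    and ZA: "Zl E (\<lambda>e. tanh (J e)) A \<noteq> 0" and ZB: "Zl E (\<lambda>e. tanh (J e)) B \<noteq> 0"
  shows "double_current E J A B \<omega> = real (card (fsub A \<omega>)) * Wsum E (\<lambda>e. tanh (J e)) (symd A B) \<omega>
            / (Zl E (\<lambda>e. tanh (J e)) A * Zl E (\<lambda>e. tanh (J e)) B)"
proof -
  let ?t = "\<lambda>e. tanh (J e)"
  let ?C = "\<Prod>e\<in>E. cosh (J e)"
  have C0: "?C \<noteq> 0" by (simp add: prod_pos less_imp_neq[symmetric])
  have sc: "single_current E J C \<omega>' = Nsum E J C \<omega>' / (?C * Zl E ?t C)" if "\<omega>' \<subseteq> E" for C \<omega>'
    using single_current_eq[OF fin J that, of C] den_eval[OF fin, of J C] by simp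
  have "double_current E J A B \<omega>
      = (\<Sum>\<omega>1\<in>Pow E. \<Sum>\<omega>2\<in>Pow E. if \<omega>1 \<union> \<omega>2 = \<omega> then Nsum E J A \<omega>1 * Nsum E J B \<omega>2 else 0) / (?C * Zl E ?t A * (?C * Zl E ?t B))"
    unfolding double_current_def munion_def sum_divide_distrib
    by (intro sum.cong[OF refl]) (auto simp: sc)
  also have "\<dots> = ?C * ?C * (real (card (fsub A \<omega>)) * Wsum E ?t (symd A B) \<omega>) / (?C * Zl E ?t A * (?C * Zl E ?t B))"
    by (simp only: quad[OF fin w])
  also have "\<dots> = real (card (fsub A \<omega>)) * Wsum E ?t (symd A B) \<omega> / (Zl E ?t A * Zl E ?t B)"
    using C0 by (simp add: field_simps)
  finally show ?thesis .
qed



theorem proposition2p2: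
  fixes V :: "'v set" and E :: "'v set set" and J :: "'v set \<Rightarrow> real"
    and A B :: "'v set"
  assumes G: "simple_graph V E"
    and Jpos: "\<forall>e\<in>E. J e > 0"
    and AV: "A \<subseteq> V" and BV: "B \<subseteq> V"
    and evA: "even (card A)" and evB: "even (card B)"
    and Areal: "\<exists>F\<subseteq>E. bdry F = A" and Breal: "\<exists>F\<subseteq>E. bdry F = B"
  defines "t \<equiv> (\<lambda>e. tanh (J e))"
  defines "\<P> \<equiv> jointP E t A B"
  shows
    \<comment> \<open>(a) marginal on Sigma is the loop O(1) measure with sources A\<close>
    "(\<forall>\<eta>\<in>SigmaA E A. (\<Sum>\<omega>\<in>Pow E. \<P> \<omega> \<eta>) = loopO1 E t A \<eta>)
     \<comment> \<open>(a) conditional on omega is uniform on subgraphs of omega with sources A\<close>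
     \<and> (\<forall>\<omega>\<in>FF E A \<inter> FF E B. \<forall>\<eta>\<in>SigmaA E A.
          \<P> \<omega> \<eta> / (\<Sum>\<eta>'\<in>SigmaA E A. \<P> \<omega> \<eta>')
            = (if \<eta> \<in> fsub A \<omega> then 1 / real (card (fsub A \<omega>)) else 0))
     \<comment> \<open>(b) marginal on Omega is the double random current\<close>
     \<and> (\<forall>\<omega>\<in>Pow E. (\<Sum>\<eta>\<in>SigmaA E A. \<P> \<omega> \<eta>) = double_current E J A B \<omega>)
     \<comment> \<open>(b) conditional on eta\<close>
     \<and> (\<forall>\<eta>\<in>SigmaA E A. \<forall>\<omega>\<in>Pow E.
          \<P> \<omega> \<eta> / (\<Sum>\<omega>'\<in>Pow E. \<P> \<omega>' \<eta>)
            = munion E (munion E (loopO1 E t B) (perc E (\<lambda>e. (t e)\<^sup>2))) (dirac \<eta>) \<omega>)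
     \<comment> \<open>in particular: uniform A-subgraph of a double current has law loop O(1) with sources A\<close>
     \<and> (\<forall>\<eta>\<in>SigmaA E A.
          (\<Sum>\<omega>\<in>Pow E. double_current E J A B \<omega> *
              (if \<eta> \<in> fsub A \<omega> then 1 / real (card (fsub A \<omega>)) else 0))
            = loopO1 E t A \<eta>)"
proof -
  note tdef = \<open>t \<equiv> (\<lambda>e. tanh (J e))\<close> and Pdef = \<open>\<P> \<equiv> jointP E t A B\<close>
  have fE: "finite E"
  proof -
    have "E \<subseteq> Pow V" using G by (auto simp: simple_graph_def)
    moreover have "finite V" using G by (simp add: simple_graph_def)
    ultimately show ?thesis using finite_subset by blast
  qed
  have fP: "finite (Pow E)" using fE by simp
  have tt: "\<forall>e\<in>E. 0 < t e \<and> t e < 1" using Jpos by (simp add: tdef tanh_real_lt_1)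
  have J0: "\<forall>e\<in>E. 0 \<le> J e" using Jpos by (auto intro: less_imp_le)
  obtain FA where FA: "FA \<subseteq> E" "bdry FA = A" using Areal by blast
  obtain FB where FB: "FB \<subseteq> E" "bdry FB = B" using Breal by blast
  define C where "C = symd A B"
  have finsub: "finite X" if "X \<subseteq> E" for X using that fE finite_subset by blast
  have bC: "bdry (symd FA FB) = C"
    using bdry_symd[OF finsub[OF FA(1)] finsub[OF FB(1)]] FA FB by (simp add: C_def)
  have FC: "symd FA FB \<subseteq> E" using FA FB by (auto simp: symd_def)
  define ZA where "ZA = Zl E t A"
  define ZB where "ZB = Zl E t B"
  define ZC where "ZC = Zl E t C"
  have ZA0: "ZA > 0" unfolding ZA_def by (rule Zl_pos[OF fE tt FA])
  have ZB0: "ZB > 0" unfolding ZB_def by (rule Zl_pos[OF fE tt FB])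
  have ZC0: "ZC > 0" unfolding ZC_def by (rule Zl_pos[OF fE tt FC bC])
  let ?W = "Wsum E t C"
  let ?tp = "\<lambda>\<eta>. \<Prod>e\<in>\<eta>. t e"
  have rhoU: "rho_unnorm E t A B \<omega> = (if \<omega> \<in> FF E A then ?W \<omega> / ZC else 0)" if "\<omega> \<subseteq> E" for \<omega>
    unfolding rho_unnorm_def using munion_W[OF fE that, of t C] by (simp add: C_def ZC_def)
  define Zr where "Zr = (\<Sum>\<omega>'\<in>Pow E. rho_unnorm E t A B \<omega>')"
  have Zr0: "Zr > 0"
    unfolding Zr_def
  proof (rule sum_pos2[where i=E])
    show "finite (Pow E)" by (rule fP)
    show "E \<in> Pow E" by simp
    have "E \<in> FF E A" using FA by (auto simp: FF_def)
    moreover have "?W E > 0" by (rule Wsum_pos[OF fE tt _ FC bC]) simp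
    ultimately show "0 < rho_unnorm E t A B E" using rhoU[of E] ZC0 by simp
    show "0 \<le> rho_unnorm E t A B i" if "i \<in> Pow E" for i
      using rhoU[of i] that Wsum_nonneg[OF tt, of C i] ZC0 by simp
  qed
  have SAfin: "finite (SigmaA E A)" by (rule finite_subset[OF _ fP]) (auto simp: SigmaA_def)
  have SAne: "FA \<in> SigmaA E A" using FA by (simp add: SigmaA_def)
  define NS where "NS = real (card (SigmaA E A))"
  have NS0: "NS > 0" unfolding NS_def using SAfin SAne card_gt_0_iff by auto
  define K where "K = ZC * Zr * NS"
  have K0: "K > 0" unfolding K_def using ZC0 Zr0 NS0 by simp
  have ju: "joint_unnorm E t A B \<omega> \<eta> = (if \<omega> \<subseteq> E \<and> \<eta> \<in> SigmaA E A \<and> \<eta> \<subseteq> \<omega> then ?W \<omega> / K else 0)" for \<omega> \<eta>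
  proof (cases "\<omega> \<subseteq> E \<and> \<eta> \<in> SigmaA E A \<and> \<eta> \<subseteq> \<omega>")
    case True
    then have "\<omega> \<in> FF E A" by (auto simp: FF_def SigmaA_def)
    then have "rho E t A B \<omega> = ?W \<omega> / ZC / Zr" using rhoU[of \<omega>] True by (simp add: rho_def Zr_def)
    then show ?thesis using True
      by (simp add: joint_unnorm_def gamma_def fsub_def SigmaA_def K_def NS_def)
  next
    case False
    then show ?thesis by (auto simp: joint_unnorm_def fsub_def)
  qed
  define M where "M \<eta> = munion E (munion E (loopO1 E t B) (perc E (\<lambda>e. (t e)\<^sup>2))) (dirac \<eta>)" for \<eta>
  have Mtot: "(\<Sum>\<omega>\<in>Pow E. M \<eta> \<omega>) = 1" if "\<eta> \<subseteq> E" for \<eta>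
    unfolding M_def munion_total[OF fE] perc_total[OF fE] dirac_total[OF fE that]
    using loop_total[OF fE, of t B] ZB0 by (simp add: ZB_def)
  have Mzero: "M \<eta> \<omega> = 0" if "\<eta> \<subseteq> E" "\<omega> \<subseteq> E" "\<not> \<eta> \<subseteq> \<omega>" for \<eta> \<omega>
    unfolding M_def using munion_dirac[OF fE that(1,2)] that(3) by simp
  have keyW: "?W \<omega> = ?tp \<eta> * ZB * M \<eta> \<omega>" if "\<eta> \<in> SigmaA E A" "\<eta> \<subseteq> \<omega>" "\<omega> \<subseteq> E" for \<eta> \<omega>
    unfolding M_def C_def ZB_def
    by (rule key_I[OF fE that(2) that(3)]) (use that ZB0 in \<open>auto simp: SigmaA_def ZB_def\<close>)
  have tp0: "?tp \<eta> > 0" if "\<eta> \<in> SigmaA E A" for \<eta>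
    by (rule prod_pos) (use that tt in \<open>auto simp: SigmaA_def\<close>)
  have SW: "(\<Sum>\<omega>\<in>Pow E. if \<eta> \<subseteq> \<omega> then ?W \<omega> else 0) = ?tp \<eta> * ZB" if eS: "\<eta> \<in> SigmaA E A" for \<eta>
  proof -
    have eE: "\<eta> \<subseteq> E" using eS by (simp add: SigmaA_def)
    have "(\<Sum>\<omega>\<in>Pow E. if \<eta> \<subseteq> \<omega> then ?W \<omega> else 0) = (\<Sum>\<omega>\<in>Pow E. ?tp \<eta> * ZB * M \<eta> \<omega>)"
      by (rule sum.cong[OF refl]) (use keyW[OF eS] Mzero[OF eE] in auto)
    also have "\<dots> = ?tp \<eta> * ZB" using Mtot[OF eE] by (simp add: sum_distrib_left[symmetric])
    finally show ?thesis .
  qed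
  have sumw: "(\<Sum>\<omega>\<in>Pow E. joint_unnorm E t A B \<omega> \<eta>) = ?tp \<eta> * ZB / K" if eS: "\<eta> \<in> SigmaA E A" for \<eta>
  proof -
    have "(\<Sum>\<omega>\<in>Pow E. joint_unnorm E t A B \<omega> \<eta>) = (\<Sum>\<omega>\<in>Pow E. (if \<eta> \<subseteq> \<omega> then ?W \<omega> else 0) / K)"
      by (rule sum.cong[OF refl]) (use eS in \<open>auto simp: ju\<close>)
    then show ?thesis using SW[OF eS] by (simp add: sum_divide_distrib[symmetric])
  qed
  have fsubE: "fsub A \<omega> = {\<eta>\<in>SigmaA E A. \<eta> \<subseteq> \<omega>}" if "\<omega> \<subseteq> E" for \<omega>
    using that by (auto simp: fsub_def SigmaA_def)
  have fsubfin: "finite (fsub A \<omega>)" if "\<omega> \<subseteq> E" for \<omega>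
    using fsubE[OF that] SAfin by simp
  have sume: "(\<Sum>\<eta>\<in>SigmaA E A. joint_unnorm E t A B \<omega> \<eta>) = real (card (fsub A \<omega>)) * ?W \<omega> / K"
    if wE: "\<omega> \<subseteq> E" for \<omega>
  proof -
    have "(\<Sum>\<eta>\<in>SigmaA E A. joint_unnorm E t A B \<omega> \<eta>) = (\<Sum>\<eta>\<in>SigmaA E A. if \<eta> \<subseteq> \<omega> then ?W \<omega> / K else 0)"
      by (rule sum.cong[OF refl]) (use wE in \<open>simp add: ju\<close>)
    also have "\<dots> = (\<Sum>\<eta>\<in>{\<eta>\<in>SigmaA E A. \<eta> \<subseteq> \<omega>}. ?W \<omega> / K)"
      by (simp only: sum.inter_filter[OF SAfin])
    also have "\<dots> = real (card (fsub A \<omega>)) * ?W \<omega> / K"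
      using fsubE[OF wE] by simp
    finally show ?thesis .
  qed
  have ZAsum: "ZA = (\<Sum>\<eta>\<in>SigmaA E A. ?tp \<eta>)"
  proof -
    have "SigmaA E A = {\<eta>\<in>Pow E. bdry \<eta> = A}" by (auto simp: SigmaA_def)
    then show ?thesis unfolding ZA_def Zl_def by (simp only: sum.inter_filter[OF fP])
  qed
  define Zj where "Zj = (\<Sum>\<omega>'\<in>Pow E. \<Sum>\<eta>'\<in>SigmaA E A. joint_unnorm E t A B \<omega>' \<eta>')"
  have Zj: "Zj = ZA * ZB / K"
  proof -
    have "Zj = (\<Sum>\<eta>\<in>SigmaA E A. \<Sum>\<omega>\<in>Pow E. joint_unnorm E t A B \<omega> \<eta>)"
      unfolding Zj_def by (rule sum.swap)
    also have "\<dots> = (\<Sum>\<eta>\<in>SigmaA E A. ?tp \<eta> * ZB / K)"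
      by (rule sum.cong[OF refl]) (rule sumw)
    also have "\<dots> = ZA * ZB / K"
      unfolding ZAsum by (simp add: sum_divide_distrib[symmetric] sum_distrib_right[symmetric])
    finally show ?thesis .
  qed
  have Zj0: "Zj > 0" unfolding Zj using ZA0 ZB0 K0 by simp
  have Pj: "\<P> \<omega> \<eta> = joint_unnorm E t A B \<omega> \<eta> / Zj" for \<omega> \<eta>
    unfolding Pdef jointP_def Zj_def by simp
  have DC: "double_current E J A B \<omega> = real (card (fsub A \<omega>)) * ?W \<omega> / (ZA * ZB)" if "\<omega> \<subseteq> E" for \<omega>
    using DC_eq[OF fE J0 that] ZA0 ZB0 by (simp add: ZA_def ZB_def C_def tdef)
  have c1: "\<forall>\<eta>\<in>SigmaA E A. (\<Sum>\<omega>\<in>Pow E. \<P> \<omega> \<eta>) = loopO1 E t A \<eta>"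
  proof
    fix \<eta> assume eS: "\<eta> \<in> SigmaA E A"
    have "(\<Sum>\<omega>\<in>Pow E. \<P> \<omega> \<eta>) = (?tp \<eta> * ZB / K) / Zj"
      unfolding Pj sum_divide_distrib[symmetric] sumw[OF eS] ..
    also have "\<dots> = ?tp \<eta> / ZA" unfolding Zj using ZA0 ZB0 K0 by (simp add: field_simps)
    also have "\<dots> = loopO1 E t A \<eta>" using eS by (simp add: loopO1_def SigmaA_def ZA_def Zl_def)
    finally show "(\<Sum>\<omega>\<in>Pow E. \<P> \<omega> \<eta>) = loopO1 E t A \<eta>" .
  qed
  have c2: "\<forall>\<omega>\<in>FF E A \<inter> FF E B. \<forall>\<eta>\<in>SigmaA E A.
          \<P> \<omega> \<eta> / (\<Sum>\<eta>'\<in>SigmaA E A. \<P> \<omega> \<eta>')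
            = (if \<eta> \<in> fsub A \<omega> then 1 / real (card (fsub A \<omega>)) else 0)"
  proof (intro ballI)
    fix \<omega> \<eta> assume wF: "\<omega> \<in> FF E A \<inter> FF E B" and eS: "\<eta> \<in> SigmaA E A"
    have wE: "\<omega> \<subseteq> E" using wF by (simp add: FF_def)
    obtain F1 where F1: "F1 \<subseteq> \<omega>" "bdry F1 = A" using wF by (auto simp: FF_def)
    obtain F2 where F2: "F2 \<subseteq> \<omega>" "bdry F2 = B" using wF by (auto simp: FF_def)
    have "bdry (symd F1 F2) = C"
      using bdry_symd[OF finsub finsub, of F1 F2] F1 F2 wE by (simp add: C_def)
    moreover have "symd F1 F2 \<subseteq> \<omega>" using F1 F2 by (auto simp: symd_def)
    ultimately have W0: "?W \<omega> > 0" by (intro Wsum_pos[OF fE tt wE])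
    have "\<P> \<omega> \<eta> / (\<Sum>\<eta>'\<in>SigmaA E A. \<P> \<omega> \<eta>') = joint_unnorm E t A B \<omega> \<eta> / (\<Sum>\<eta>'\<in>SigmaA E A. joint_unnorm E t A B \<omega> \<eta>')"
      unfolding Pj sum_divide_distrib[symmetric] using Zj0 by simp
    also have "\<dots> = (if \<eta> \<subseteq> \<omega> then ?W \<omega> / K else 0) / (real (card (fsub A \<omega>)) * ?W \<omega> / K)"
      unfolding sume[OF wE] using eS wE by (simp add: ju)
    also have "\<dots> = (if \<eta> \<in> fsub A \<omega> then 1 / real (card (fsub A \<omega>)) else 0)"
    proof (cases "\<eta> \<subseteq> \<omega>")
      case True
      then have "\<eta> \<in> fsub A \<omega>" using eS by (simp add: fsub_def SigmaA_def)
      then have "card (fsub A \<omega>) > 0" using fsubfin[OF wE] card_gt_0_iff by blast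
      then show ?thesis using True W0 K0 \<open>\<eta> \<in> fsub A \<omega>\<close> by (simp add: field_simps)
    next
      case False
      then have "\<eta> \<notin> fsub A \<omega>" by (simp add: fsub_def)
      then show ?thesis using False by simp
    qed
    finally show "\<P> \<omega> \<eta> / (\<Sum>\<eta>'\<in>SigmaA E A. \<P> \<omega> \<eta>') = (if \<eta> \<in> fsub A \<omega> then 1 / real (card (fsub A \<omega>)) else 0)" .
  qed
  have c3: "\<forall>\<omega>\<in>Pow E. (\<Sum>\<eta>\<in>SigmaA E A. \<P> \<omega> \<eta>) = double_current E J A B \<omega>"
  proof
    fix \<omega> assume "\<omega> \<in> Pow E"
    then have wE: "\<omega> \<subseteq> E" by simp
    have "(\<Sum>\<eta>\<in>SigmaA E A. \<P> \<omega> \<eta>) = (real (card (fsub A \<omega>)) * ?W \<omega> / K) / Zj"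
      unfolding Pj sum_divide_distrib[symmetric] sume[OF wE] ..
    also have "\<dots> = real (card (fsub A \<omega>)) * ?W \<omega> / (ZA * ZB)"
      unfolding Zj using ZA0 ZB0 K0 by (simp add: field_simps)
    finally show "(\<Sum>\<eta>\<in>SigmaA E A. \<P> \<omega> \<eta>) = double_current E J A B \<omega>" using DC[OF wE] by simp
  qed
  have c4: "\<forall>\<eta>\<in>SigmaA E A. \<forall>\<omega>\<in>Pow E.
          \<P> \<omega> \<eta> / (\<Sum>\<omega>'\<in>Pow E. \<P> \<omega>' \<eta>)
            = munion E (munion E (loopO1 E t B) (perc E (\<lambda>e. (t e)\<^sup>2))) (dirac \<eta>) \<omega>"
  proof (intro ballI)
    fix \<eta> \<omega> assume eS: "\<eta> \<in> SigmaA E A" and "\<omega> \<in> Pow E"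
    then have wE: "\<omega> \<subseteq> E" by simp
    have eE: "\<eta> \<subseteq> E" using eS by (simp add: SigmaA_def)
    have "\<P> \<omega> \<eta> / (\<Sum>\<omega>'\<in>Pow E. \<P> \<omega>' \<eta>) = joint_unnorm E t A B \<omega> \<eta> / (?tp \<eta> * ZB / K)"
      unfolding Pj sum_divide_distrib[symmetric] sumw[OF eS] using Zj0 by simp
    also have "\<dots> = M \<eta> \<omega>"
    proof (cases "\<eta> \<subseteq> \<omega>")
      case True
      then show ?thesis using keyW[OF eS True wE] eS wE tp0[OF eS] ZB0 K0 by (simp add: ju field_simps)
    next
      case False
      then show ?thesis using Mzero[OF eE wE False] by (simp add: ju)
    qed
    finally show "\<P> \<omega> \<eta> / (\<Sum>\<omega>'\<in>Pow E. \<P> \<omega>' \<eta>) = munion E (munion E (loopO1 E t B) (perc E (\<lambda>e. (t e)\<^sup>2))) (dirac \<eta>) \<omega>"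
      by (simp add: M_def)
  qed
  have c5: "\<forall>\<eta>\<in>SigmaA E A.
          (\<Sum>\<omega>\<in>Pow E. double_current E J A B \<omega> *
              (if \<eta> \<in> fsub A \<omega> then 1 / real (card (fsub A \<omega>)) else 0))
            = loopO1 E t A \<eta>"
  proof
    fix \<eta> assume eS: "\<eta> \<in> SigmaA E A"
    have "(\<Sum>\<omega>\<in>Pow E. double_current E J A B \<omega> * (if \<eta> \<in> fsub A \<omega> then 1 / real (card (fsub A \<omega>)) else 0))
        = (\<Sum>\<omega>\<in>Pow E. (if \<eta> \<subseteq> \<omega> then ?W \<omega> else 0) / (ZA * ZB))"
    proof (rule sum.cong[OF refl])
      fix \<omega> assume "\<omega> \<in> Pow E"
      then have wE: "\<omega> \<subseteq> E" by simp
      show "double_current E J A B \<omega> * (if \<eta> \<in> fsub A \<omega> then 1 / real (card (fsub A \<omega>)) else 0)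
          = (if \<eta> \<subseteq> \<omega> then ?W \<omega> else 0) / (ZA * ZB)"
      proof (cases "\<eta> \<subseteq> \<omega>")
        case True
        then have ef: "\<eta> \<in> fsub A \<omega>" using eS by (simp add: fsub_def SigmaA_def)
        then have "card (fsub A \<omega>) > 0" using fsubfin[OF wE] card_gt_0_iff by blast
        then show ?thesis using True ef DC[OF wE] by simp
      next
        case False
        then have "\<eta> \<notin> fsub A \<omega>" by (simp add: fsub_def)
        then show ?thesis using False by simp
      qed
    qed
    also have "\<dots> = ?tp \<eta> * ZB / (ZA * ZB)"
      using SW[OF eS] by (simp add: sum_divide_distrib[symmetric])
    also have "\<dots> = ?tp \<eta> / ZA" using ZB0 by simp
    also have "\<dots> = loopO1 E t A \<eta>" using eS by (simp add: loopO1_def SigmaA_def ZA_def Zl_def)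
    finally show "(\<Sum>\<omega>\<in>Pow E. double_current E J A B \<omega> * (if \<eta> \<in> fsub A \<omega> then 1 / real (card (fsub A \<omega>)) else 0)) = loopO1 E t A \<eta>" .
  qed
  show ?thesis using c1 c2 c3 c4 c5 by blast
qed


end
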